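(* Let $\bm{x}\in\mathbb{R}^d$, $X\in\mathbb{R}^{d\times n}$, ${\bm w}\in\mathbb{R}^n$, $\alpha_1>0$, $\alpha_2\ge 0$, and define for ${\bm z}\in\mathbb{R}^n$ $$f({\bm z})=\tfrac12\|\bm{x}-X{\bm z}\|_2^2+\alpha_1\|X\,\mathrm{Diag}({\bm z})\|_*+\tfrac{\alpha_2}{2}\|{\bm z}-{\bm w}\|_2^2 .$$ Suppose (after reordering columns/coordinates consistently) $X=[\hat X,\tilde X]$ with $\tilde X\in\mathbb{R}^{d\times q}$, $\hat X\in\mathbb{R}^{d\times(n-q)}$, ${\bm w}=[\hat{\bm w};\tilde{\bm w}]$ with $\tilde{\bm w}\in\mathbb{R}^q$, and let ${\bm z}=[\hat{\bm z};\tilde{\bm z}]$ be any vector split the same way. Let $\bar{\bm x}_0=\tilde X\mathbf{1}/q$, $\bar z=\mathbf{1}^T\tilde{\bm z}/q$, $\bar w=\mathbf{1}^T\tilde{\bm w}/q$, and let $\epsilon\ge0$ be such that $$\max\{\|\tilde X-\bar{\bm x}_0\mathbf{1}^T\|_*,\ \|\tilde X-\bar{\bm x}_0\mathbf{1}^T\|_F,\ \|\tilde X-\bar{\bm x}_0\mathbf{1}^T\|_2\}\le\epsilon\quad\text{and}\quad\|\tilde{\bm w}-\bar w\mathbf{1}\|_2\le\epsilon .$$ Let ${\bm y}^*\in\mathbb{R}^q$ be the optimal solution of $\min_{{\bm y}}\|{\bm y}-\tilde{\bm w}\|_2^2$ s.t. ${\bm y}^T\mathbf{1}=q\bar z$.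 Assume $\bar{\bm x}_0\neq 0$ and $[\hat X\mathrm{Diag}(\hat{\bm z})\ \ \bar{\bm x}_0\tilde{\bm z}^T]\neq 0$. Define $$\gamma=\Big(\big(\alpha_1+\|\bm{x}-\hat X\hat{\bm z}-\tilde X(\bar z\mathbf{1})\|_2\big)\|\tilde{\bm z}\|_2+\alpha_1|\bar z|\Big)\epsilon,$$ $$\delta=\sqrt{\frac{\Big(2\gamma-\alpha_2\sum_{j=1}^q(y_j^*-\bar z)(y_j^*+\bar z-2\tilde w_j)\Big)\,\big\|[\hat X\mathrm{Diag}(\hat{\bm z})\ \ \bar{\bm x}_0\tilde{\bm z}^T]\big\|_2}{\alpha_1\|\bar{\bm x}_0\|_2^2}} .$$ If $\|\tilde{\bm z}-\bar z\mathbf{1}\|_2>\delta$, then $f([\hat{\bm z};\tilde{\bm z}])>f([\hat{\bm z};\bar z\mathbf{1}])$.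
   Context: $\|\cdot\|_*$ is the nuclear norm (sum of singular values), $\|\cdot\|_F$ the Frobenius norm, $\|\cdot\|_2$ the Euclidean norm for vectors and spectral norm for matrices. $\mathrm{Diag}({\bm z})$ is the diagonal matrix with ${\bm z}$ on its main diagonal; $\mathbf{1}$ is the all-ones vector of the appropriate length ($\mathbb{R}^q$ above). The quantity $\|X\mathrm{Diag}({\bm z})\|_*$ is called the trace Lasso of ${\bm z}$. (The expression under the square root is nonnegative since $\gamma\ge0$ and $\sum_j(y_j^*-\bar z)(y_j^*+\bar z-2\tilde w_j)=\|{\bm y}^*-\tilde{\bm w}\|_2^2-\|\bar z\mathbf{1}-\tilde{\bm w}\|_2^2\le 0$.) *)

theory Defs
  imports "Jordan_Normal_Form.Char_Poly"
begin

definition vnorm :: "real vec \<Rightarrow> real" where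
  "vnorm v = sqrt (\<Sum>i<dim_vec v. (v $ i)^2)"

definition ones :: "nat \<Rightarrow> real vec" where
  "ones q = vec q (\<lambda>_. 1)"

definition Diag :: "real vec \<Rightarrow> real mat" where
  "Diag z = mat (dim_vec z) (dim_vec z) (\<lambda>(i,j). if i = j then z $ i else 0)"

definition hcat :: "real mat \<Rightarrow> real mat \<Rightarrow> real mat" where
  "hcat A B = mat (dim_row A) (dim_col A + dim_col B)
     (\<lambda>(i,j). if j < dim_col A then A $$ (i,j) else B $$ (i, j - dim_col A))"

definition outer :: "real vec \<Rightarrow> real vec \<Rightarrow> real mat" where
  "outer u v = mat (dim_vec u) (dim_vec v) (\<lambda>(i,j). u $ i * v $ j)"

(* eigenvalues of A^T A (as the set of roots of its characteristic polynomial);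
   singular values are their square roots, counted with algebraic multiplicity *)
definition gram_eigs :: "real mat \<Rightarrow> real set" where
  "gram_eigs A = {t. poly (char_poly (transpose_mat A * A)) t = 0}"

(* nuclear norm: sum of singular values (with multiplicity) *)
definition nuc_norm :: "real mat \<Rightarrow> real" where
  "nuc_norm A = (\<Sum>t\<in>gram_eigs A.
      real (order t (char_poly (transpose_mat A * A))) * sqrt t)"

(* spectral norm: largest singular value (0 for an empty matrix) *)
definition spec_norm :: "real mat \<Rightarrow> real" where
  "spec_norm A = Max (insert 0 (sqrt ` gram_eigs A))"

definition frob_norm :: "real mat \<Rightarrow> real" where
  "frob_norm A = sqrt (\<Sum>i<dim_row A. \<Sum>j<dim_col A. (A $$ (i,j))^2)"

definition obj :: "real vec \<Rightarrow> real mat \<Rightarrow> real \<Rightarrow> real \<Rightarrow> real vec \<Rightarrow> real vec \<Rightarrow> real" where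
  "obj x X \<alpha>1 \<alpha>2 w z =
     (1/2) * (vnorm (x - X *\<^sub>v z))^2 + \<alpha>1 * nuc_norm (X * Diag z)
     + (\<alpha>2/2) * (vnorm (z - w))^2"

end

theory Submission
  imports Defs "HOL-Computational_Algebra.Fundamental_Theorem_Algebra" "Jordan_Normal_Form.Schur_Decomposition"
begin


lemma sym_real_eigenvalue:
  fixes S :: "real mat"
  assumes S: "S \<in> carrier_mat n n" and sym: "transpose_mat S = S" and n: "n > 0"
  shows "\<exists>e. eigenvalue S e"
proof -
  let ?Sc = "map_mat complex_of_real S"
  have Sc: "?Sc \<in> carrier_mat n n" using S by auto
  have cp: "char_poly ?Sc = map_poly of_real (char_poly S)"
    using of_real_hom.char_poly_hom[OF S] by simp
  have "degree (char_poly ?Sc) = n" using degree_monic_char_poly[OF Sc] by auto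
  then obtain l where l: "poly (char_poly ?Sc) l = 0"
    using alg_closed_imp_poly_has_root[of "char_poly ?Sc"] n by auto
  hence ev: "eigenvalue ?Sc l" using eigenvalue_root_char_poly[OF Sc] by simp
  define v where "v = find_eigenvector ?Sc l"
  have evec: "eigenvector ?Sc v l" using find_eigenvector[OF Sc ev] unfolding v_def .
  hence v: "v \<in> carrier_vec n" and v0: "v \<noteq> 0\<^sub>v n" and Sv: "?Sc *\<^sub>v v = l \<cdot>\<^sub>v v"
    unfolding eigenvector_def using Sc by auto
  have Sv_i: "(\<Sum>j<n. of_real (S $$ (i,j)) * v $ j) = l * v $ i" if "i < n" for i
  proof -
    have "(?Sc *\<^sub>v v) $ i = l * v $ i" using Sv that v by simp
    moreover have "(?Sc *\<^sub>v v) $ i = (\<Sum>j<n. of_real (S $$ (i,j)) * v $ j)"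
      using that S v by (auto simp: mult_mat_vec_def scalar_prod_def lessThan_atLeast0 intro!: sum.cong)
    ultimately show ?thesis by simp
  qed
  define s where "s = (\<Sum>i<n. \<Sum>j<n. cnj (v $ i) * of_real (S $$ (i,j)) * v $ j)"
  define N where "N = (\<Sum>i<n. cnj (v $ i) * v $ i)"
  have sN: "s = l * N"
  proof -
    have "s = (\<Sum>i<n. cnj (v $ i) * (\<Sum>j<n. of_real (S $$ (i,j)) * v $ j))"
      unfolding s_def by (simp add: sum_distrib_left mult.assoc)
    also have "\<dots> = (\<Sum>i<n. cnj (v $ i) * (l * v $ i))" using Sv_i by simp
    also have "\<dots> = l * N" unfolding N_def by (simp add: sum_distrib_left algebra_simps)
    finally show ?thesis .
  qed
  have Sij: "S $$ (j,i) = S $$ (i,j)" if "i < n" "j < n" for i j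
  proof -
    have "transpose_mat S $$ (i,j) = S $$ (j,i)" using S that by simp
    thus ?thesis using sym by simp
  qed
  have "cnj s = (\<Sum>i<n. \<Sum>j<n. v $ i * of_real (S $$ (i,j)) * cnj (v $ j))"
    unfolding s_def by (simp add: cnj_sum)
  also have "\<dots> = (\<Sum>j<n. \<Sum>i<n. v $ i * of_real (S $$ (i,j)) * cnj (v $ j))"
    by (rule sum.swap)
  also have "\<dots> = s" unfolding s_def
    by (intro sum.cong refl, auto simp: Sij mult.commute mult.left_commute)
  finally have sreal: "Im s = 0" by (metis cnj.simps(2) neg_equal_zero)
  have Nre: "N = of_real (\<Sum>i<n. (cmod (v $ i))^2)"
    unfolding N_def of_real_sum by (intro sum.cong refl) (metis complex_norm_square mult.commute)
  obtain k where k: "k < n" "v $ k \<noteq> 0" using v v0 by (metis eq_vecI carrier_vecD index_zero_vec)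
  have "(\<Sum>i<n. (cmod (v $ i))^2) > 0"
  proof -
    have "(\<Sum>i<n. (cmod (v $ i))^2) \<ge> (cmod (v $ k))^2"
      using k by (intro member_le_sum) auto
    moreover have "(cmod (v $ k))^2 > 0" using k by simp
    ultimately show ?thesis by linarith
  qed
  moreover have "Im s = Im l * (\<Sum>i<n. (cmod (v $ i))^2)" using sN Nre by simp
  ultimately have "Im l = 0" using sreal by simp
  hence lre: "l = of_real (Re l)" by (simp add: complex_eq_iff)
  have "of_real (poly (char_poly S) (Re l)) = (0::complex)"
    using l cp lre by (metis of_real_hom.poly_map_poly)
  hence "poly (char_poly S) (Re l) = 0" by simp
  thus ?thesis using eigenvalue_root_char_poly[OF S] by blast
qed

lemma real_sprodc: "(v::real vec) \<bullet>c w = v \<bullet> w"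
proof -
  have "conjugate w = w" by (rule eq_vecI) (auto simp: conjugate_vec_def)
  thus ?thesis by simp
qed

lemma orth_completion:
  fixes v :: "real vec"
  assumes v: "v \<in> carrier_vec n" and v1: "v \<bullet> v = 1"
  shows "\<exists>W \<in> carrier_mat n n. transpose_mat W * W = 1\<^sub>m n \<and> col W 0 = v"
proof -
  have v0: "v \<noteq> 0\<^sub>v n" using v1 v by auto
  have n: "n > 0" using v v0 by (metis carrier_vecD eq_vecI gr0I index_zero_vec(2) less_nat_zero_code)
  interpret cof_vec_space n "TYPE(real)" .
  define b where "b = basis_completion v"
  from basis_completion[OF v v0, folded b_def]
  have dist_b: "distinct b" and indep: "\<not> lin_dep (set b)" and bc: "set b \<subseteq> carrier_vec n"
    and hdb: "hd b = v" and len_b: "length b = n" by auto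
  from hdb len_b n obtain vs where bv: "b = v # vs" by (cases b, auto)
  define ws where "ws = gram_schmidt n b"
  from gram_schmidt_result[OF bc dist_b indep refl, folded ws_def]
  have wsc: "set ws \<subseteq> carrier_vec n" and orth: "corthogonal ws" and lws: "length ws = n" 
    by (auto simp: len_b)
  from gram_schmidt_hd[OF v, of vs, folded bv] have hdws: "hd ws = v" unfolding ws_def .
  have ws0: "ws ! 0 = v" using hdws lws n by (metis hd_conv_nth length_0_conv less_not_refl3)
  have orth': "ws ! i \<bullet> ws ! j = 0 \<longleftrightarrow> i \<noteq> j" if "i < n" "j < n" for i j
    using corthogonalD[OF orth, of i j] that lws by (simp add: real_sprodc)
  have pos: "ws ! i \<bullet> ws ! i > 0" if "i < n" for i
  proof -
    have "ws ! i \<bullet> ws ! i \<ge> 0" 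
      by (simp add: scalar_prod_def sum_nonneg)
    thus ?thesis using orth'[OF that that] by simp
  qed
  define ws' where "ws' = map (\<lambda>w. (1 / sqrt (w \<bullet> w)) \<cdot>\<^sub>v w) ws"
  define W where "W = mat_of_cols n ws'"
  have ws'c: "set ws' \<subseteq> carrier_vec n" using wsc unfolding ws'_def by auto
  have lws': "length ws' = n" unfolding ws'_def using lws by simp
  have Wc: "W \<in> carrier_mat n n" unfolding W_def using mat_of_cols_carrier(1)[of n ws'] lws' by simp
  have colW: "col W i = ws' ! i" if "i < n" for i
    unfolding W_def using that lws' ws'c by (simp add: col_mat_of_cols nth_mem subsetD)
  have wsi: "ws ! i \<in> carrier_vec n" if "i < n" for i using wsc lws that by (simp add: nth_mem subsetD)
  have "transpose_mat W * W = 1\<^sub>m n"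
  proof (rule eq_matI)
    fix i j assume i: "i < dim_row (1\<^sub>m n)" and j: "j < dim_col (1\<^sub>m n)"
    hence i: "i < n" and j: "j < n" by auto
    have "(transpose_mat W * W) $$ (i,j) = col W i \<bullet> col W j"
      using Wc i j by simp
    also have "\<dots> = (1 / sqrt (ws!i \<bullet> ws!i)) * (1 / sqrt (ws!j \<bullet> ws!j)) * (ws!i \<bullet> ws!j)"
      using colW[OF i] colW[OF j] wsi[OF i] wsi[OF j] lws i j unfolding ws'_def by simp
    also have "\<dots> = 1\<^sub>m n $$ (i,j)"
    proof (cases "i = j")
      case True
      have p: "ws!i \<bullet> ws!i > 0" using pos[OF i] .
      have "sqrt (ws!i \<bullet> ws!i) * sqrt (ws!i \<bullet> ws!i) = ws!i \<bullet> ws!i"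
        using p by (simp del: real_sqrt_mult_self add: real_sqrt_mult_self)
      hence "(1 / sqrt (ws!i \<bullet> ws!i)) * (1 / sqrt (ws!i \<bullet> ws!i)) * (ws!i \<bullet> ws!i) = 1"
      proof -
        define a where "a = ws!i \<bullet> ws!i"
        have ss: "sqrt a * sqrt a = a" "a > 0" using p unfolding a_def by auto
        have "(1 / sqrt a) * (1 / sqrt a) * a = a / (sqrt a * sqrt a)" by simp
        also have "\<dots> = 1" using ss by simp
        finally show ?thesis unfolding a_def .
      qed
      then show ?thesis using True i by simp
    next
      case False thus ?thesis using orth'[OF i j] i j by simp
    qed
    finally show "(transpose_mat W * W) $$ (i,j) = 1\<^sub>m n $$ (i,j)" .
  qed (use Wc in auto)
  moreover have "col W 0 = v" using colW[OF n] ws0 v1 lws n unfolding ws'_def by simp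
  ultimately show ?thesis using Wc by blast
qed

lemma mat_mult_idx:
  assumes "A \<in> carrier_mat a b" "B \<in> carrier_mat b c" "i < a" "j < c"
  shows "(A * B) $$ (i,j) = (\<Sum>k<b. A $$ (i,k) * B $$ (k,j))"
  using assms by (auto simp: scalar_prod_def lessThan_atLeast0 intro!: sum.cong)

definition bext :: "nat \<Rightarrow> real mat \<Rightarrow> real mat" where
  "bext m U3 = mat (Suc m) (Suc m) (\<lambda>(i,j). if i = 0 \<and> j = 0 then 1 else if i = 0 \<or> j = 0 then 0 else U3 $$ (i-1, j-1))"

lemma bext_carrier: "bext m U3 \<in> carrier_mat (Suc m) (Suc m)" unfolding bext_def by simp

lemma triple_idx:
  assumes "V \<in> carrier_mat n n" "B \<in> carrier_mat n n" "i < n" "j < n"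
  shows "(transpose_mat V * B * V) $$ (i,j) = (\<Sum>l<n. (\<Sum>k<n. V $$ (k,i) * B $$ (k,l)) * V $$ (l,j))"
proof -
  have "(transpose_mat V * B * V) $$ (i,j) = (\<Sum>l<n. (transpose_mat V * B) $$ (i,l) * V $$ (l,j))"
    using assms by (intro mat_mult_idx[of _ n n]) auto
  also have "\<dots> = (\<Sum>l<n. (\<Sum>k<n. V $$ (k,i) * B $$ (k,l)) * V $$ (l,j))"
    using assms by (intro sum.cong refl, subst mat_mult_idx[of _ n n _ n]) auto
  finally show ?thesis .
qed

lemma bext_triple:
  assumes U3: "U3 \<in> carrier_mat m m" and B: "B \<in> carrier_mat (Suc m) (Suc m)"
  defines "V \<equiv> bext m U3"
  defines "B3 \<equiv> mat m m (\<lambda>(i,j). B $$ (Suc i, Suc j))"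
  shows "i < m \<Longrightarrow> j < m \<Longrightarrow> (transpose_mat V * B * V) $$ (Suc i, Suc j) = (transpose_mat U3 * B3 * U3) $$ (i,j)"
    and "j < m \<Longrightarrow> (transpose_mat V * B * V) $$ (0, Suc j) = (\<Sum>l<m. B $$ (0, Suc l) * U3 $$ (l,j))"
    and "i < m \<Longrightarrow> (transpose_mat V * B * V) $$ (Suc i, 0) = (\<Sum>k<m. U3 $$ (k,i) * B $$ (Suc k, 0))"
proof -
  have V: "V \<in> carrier_mat (Suc m) (Suc m)" unfolding V_def by (rule bext_carrier)
  have B3: "B3 \<in> carrier_mat m m" unfolding B3_def by simp
  have Vi: "V $$ (Suc a, Suc b) = U3 $$ (a,b)" "V $$ (0, Suc b) = 0" "V $$ (Suc a, 0) = 0" "V $$ (0,0) = 1"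
    if "a < m" "b < m" for a b using that unfolding V_def bext_def by auto
  have V0: "V $$ (0, Suc b) = 0" "V $$ (Suc b, 0) = 0" if "b < m" for b using that unfolding V_def bext_def by auto
  show "i < m \<Longrightarrow> j < m \<Longrightarrow> (transpose_mat V * B * V) $$ (Suc i, Suc j) = (transpose_mat U3 * B3 * U3) $$ (i,j)"
  proof -
    assume i: "i < m" and j: "j < m"
    have "(transpose_mat V * B * V) $$ (Suc i, Suc j) = (\<Sum>l<Suc m. (\<Sum>k<Suc m. V $$ (k,Suc i) * B $$ (k,l)) * V $$ (l,Suc j))"
      using V B i j by (intro triple_idx) auto
    also have "\<dots> = (\<Sum>l<m. (\<Sum>k<m. U3 $$ (k,i) * B3 $$ (k,l)) * U3 $$ (l,j))"
      unfolding sum.lessThan_Suc_shift using i j V0 Vi by (simp add: B3_def)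
    also have "\<dots> = (transpose_mat U3 * B3 * U3) $$ (i,j)"
      using U3 B3 i j by (intro triple_idx[symmetric]) auto
    finally show ?thesis .
  qed
  show "j < m \<Longrightarrow> (transpose_mat V * B * V) $$ (0, Suc j) = (\<Sum>l<m. B $$ (0, Suc l) * U3 $$ (l,j))"
  proof -
    assume j: "j < m"
    have "(transpose_mat V * B * V) $$ (0, Suc j) = (\<Sum>l<Suc m. (\<Sum>k<Suc m. V $$ (k,0) * B $$ (k,l)) * V $$ (l,Suc j))"
      using V B j by (intro triple_idx) auto
    also have "\<dots> = (\<Sum>l<m. B $$ (0, Suc l) * U3 $$ (l,j))"
      unfolding sum.lessThan_Suc_shift using j V0 Vi by (simp add: V_def bext_def)
    finally show ?thesis .
  qed
  show "i < m \<Longrightarrow> (transpose_mat V * B * V) $$ (Suc i, 0) = (\<Sum>k<m. U3 $$ (k,i) * B $$ (Suc k, 0))"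
  proof -
    assume i: "i < m"
    have "(transpose_mat V * B * V) $$ (Suc i, 0) = (\<Sum>l<Suc m. (\<Sum>k<Suc m. V $$ (k,Suc i) * B $$ (k,l)) * V $$ (l,0))"
      using V B i by (intro triple_idx) auto
    also have "\<dots> = (\<Sum>k<m. U3 $$ (k,i) * B $$ (Suc k, 0))"
      unfolding sum.lessThan_Suc_shift using i V0 Vi by (simp add: V_def bext_def)
    finally show ?thesis .
  qed
qed


lemma spectral:
  fixes S :: "real mat"
  assumes "S \<in> carrier_mat n n" "transpose_mat S = S"
  shows "\<exists>U \<in> carrier_mat n n. transpose_mat U * U = 1\<^sub>m n \<and> U * transpose_mat U = 1\<^sub>m n \<and>
     (\<forall>i<n. \<forall>j<n. i \<noteq> j \<longrightarrow> (transpose_mat U * S * U) $$ (i,j) = 0)"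
  using assms
proof (induction n arbitrary: S)
  case 0
  show ?case by (rule bexI[of _ "1\<^sub>m 0"]) auto
next
  case (Suc m S)
  note S = Suc.prems(1) and sym = Suc.prems(2)
  obtain e where e: "eigenvalue S e" using sym_real_eigenvalue[OF S sym] by auto
  define v0 where "v0 = find_eigenvector S e"
  have "eigenvector S v0 e" using find_eigenvector[OF S e] unfolding v0_def .
  hence v0: "v0 \<in> carrier_vec (Suc m)" and v00: "v0 \<noteq> 0\<^sub>v (Suc m)" and Sv0: "S *\<^sub>v v0 = e \<cdot>\<^sub>v v0"
    unfolding eigenvector_def using S by auto
  have nn: "v0 \<bullet> v0 \<ge> 0" by (simp add: scalar_prod_def sum_nonneg)
  have "v0 \<bullet> v0 \<noteq> 0" using v0 v00 
    by (metis conjugate_square_eq_0_vec real_sprodc)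
  hence pos: "v0 \<bullet> v0 > 0" using nn by simp
  define v where "v = (1 / sqrt (v0 \<bullet> v0)) \<cdot>\<^sub>v v0"
  have v: "v \<in> carrier_vec (Suc m)" unfolding v_def using v0 by simp
  have vv: "v \<bullet> v = 1"
  proof -
    have "v \<bullet> v = (1 / sqrt (v0 \<bullet> v0)) * (1 / sqrt (v0 \<bullet> v0)) * (v0 \<bullet> v0)"
      unfolding v_def using v0 by simp
    also have "\<dots> = (v0 \<bullet> v0) / (sqrt (v0 \<bullet> v0) * sqrt (v0 \<bullet> v0))" by simp
    also have "\<dots> = 1" using pos by simp
    finally show ?thesis .
  qed
  have Sv: "S *\<^sub>v v = e \<cdot>\<^sub>v v" unfolding v_def using Sv0 S v0
    by (simp add: mult_mat_vec smult_smult_assoc mult.commute)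
  obtain W where W: "W \<in> carrier_mat (Suc m) (Suc m)" and WW: "transpose_mat W * W = 1\<^sub>m (Suc m)"
    and W0: "col W 0 = v" using orth_completion[OF v vv] by auto
  have WW': "W * transpose_mat W = 1\<^sub>m (Suc m)"
    using mat_mult_left_right_inverse[OF _ W WW] W by auto
  define A' where "A' = transpose_mat W * S * W"
  have A': "A' \<in> carrier_mat (Suc m) (Suc m)" unfolding A'_def using W S by auto
  have symA': "transpose_mat A' = A'"
  proof -
    have tW: "transpose_mat W \<in> carrier_mat (Suc m) (Suc m)" using W by simp
    have SW: "S * W \<in> carrier_mat (Suc m) (Suc m)" using W S by simp
    have "A' = transpose_mat W * (S * W)" unfolding A'_def using W S by (simp add: assoc_mult_mat)
    hence "transpose_mat A' = transpose_mat (S * W) * W" using transpose_mult[OF tW SW] by simp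
    also have "transpose_mat (S * W) = transpose_mat W * S" using transpose_mult[OF S W] sym by simp
    finally show ?thesis unfolding A'_def .
  qed
  have A'i0: "A' $$ (i,0) = (if i = 0 then e else 0)" if i: "i < Suc m" for i
  proof -
    have "A' = transpose_mat W * (S * W)" unfolding A'_def using W S by (simp add: assoc_mult_mat)
    hence "A' $$ (i,0) = row (transpose_mat W) i \<bullet> col (S * W) 0" using i W S by simp
    also have "col (S * W) 0 = S *\<^sub>v col W 0" using col_mult2[OF S W, of 0] by simp
    also have "\<dots> = e \<cdot>\<^sub>v v" using W0 Sv by simp
    also have "row (transpose_mat W) i = col W i" using i W by simp
    also have "col W i \<bullet> (e \<cdot>\<^sub>v v) = e * (col W i \<bullet> col W 0)" using W W0 v i by simp
    also have "col W i \<bullet> col W 0 = (transpose_mat W * W) $$ (i,0)" using W i by simp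
    also have "\<dots> = (if i = 0 then 1 else 0)" using WW i by simp
    finally show ?thesis by simp
  qed
  have A'0j: "A' $$ (0,j) = (if j = 0 then e else 0)" if j: "j < Suc m" for j
  proof -
    have "A' $$ (0,j) = transpose_mat A' $$ (j,0)" using A' j by simp
    thus ?thesis using symA' A'i0[OF j] by simp
  qed
  define A3 where "A3 = mat m m (\<lambda>(i,j). A' $$ (Suc i, Suc j))"
  have A3: "A3 \<in> carrier_mat m m" unfolding A3_def by simp
  have symA3: "transpose_mat A3 = A3"
  proof (rule eq_matI)
    fix i j assume "i < dim_row A3" "j < dim_col A3"
    hence i: "i < m" and j: "j < m" using A3 by auto
    have "A' $$ (Suc j, Suc i) = transpose_mat A' $$ (Suc i, Suc j)" using A' i j by simp
    thus "transpose_mat A3 $$ (i,j) = A3 $$ (i,j)" using symA' i j unfolding A3_def by simp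
  qed (use A3 in auto)
  obtain U3 where U3: "U3 \<in> carrier_mat m m" and U3U3: "transpose_mat U3 * U3 = 1\<^sub>m m"
    and diag3: "\<forall>i<m. \<forall>j<m. i \<noteq> j \<longrightarrow> (transpose_mat U3 * A3 * U3) $$ (i,j) = 0"
    using Suc.IH[OF A3 symA3] by auto
  define V where "V = bext m U3"
  have V: "V \<in> carrier_mat (Suc m) (Suc m)" unfolding V_def by (rule bext_carrier)
  have VV: "transpose_mat V * V = 1\<^sub>m (Suc m)"
  proof -
    have one: "1\<^sub>m (Suc m) \<in> carrier_mat (Suc m) (Suc m)" by simp
    have eq3: "mat m m (\<lambda>(i,j). 1\<^sub>m (Suc m) $$ (Suc i, Suc j)) = 1\<^sub>m m" by (rule eq_matI) auto
    have "transpose_mat V * V = transpose_mat V * 1\<^sub>m (Suc m) * V" using V by simp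
    also have "\<dots> = 1\<^sub>m (Suc m)"
    proof (rule eq_matI)
      fix i j assume "i < dim_row (1\<^sub>m (Suc m))" "j < dim_col (1\<^sub>m (Suc m))"
      hence i: "i < Suc m" and j: "j < Suc m" by auto
      show "(transpose_mat V * 1\<^sub>m (Suc m) * V) $$ (i,j) = 1\<^sub>m (Suc m) $$ (i,j)"
      proof (cases i)
        case 0 note i0 = this
        show ?thesis
        proof (cases j)
          case 0
          have "(transpose_mat V * 1\<^sub>m (Suc m) * V) $$ (0,0) = (transpose_mat V * V) $$ (0,0)" using V by simp
          also have "\<dots> = col V 0 \<bullet> col V 0" using V by simp
          also have "\<dots> = 1" using V unfolding V_def bext_def 
            by (simp add: scalar_prod_def sum.atLeast0_lessThan_Suc_shift del: sum.op_ivl_Suc)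
          finally show ?thesis using i0 0 by simp
        next
          case (Suc j') with bext_triple(2)[OF U3 one, of j'] i0 j show ?thesis by (simp add: V_def)
        qed
      next
        case (Suc i') note ii = this
        show ?thesis
        proof (cases j)
          case 0 with bext_triple(3)[OF U3 one, of i'] ii i show ?thesis by (simp add: V_def)
        next
          case (Suc j') with bext_triple(1)[OF U3 one, of i' j'] ii i j U3U3 U3 show ?thesis
            by (simp add: V_def eq3)
        qed
      qed
    qed (use V in auto)
    finally show ?thesis .
  qed
  have VV': "V * transpose_mat V = 1\<^sub>m (Suc m)"
    using mat_mult_left_right_inverse[OF _ V VV] V by auto
  have diagV: "(transpose_mat V * A' * V) $$ (i,j) = 0" if ij: "i < Suc m" "j < Suc m" "i \<noteq> j" for i j
  proof (cases i)
    case 0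
    then obtain j' where j': "j = Suc j'" "j' < m" using ij 0 by (cases j) auto
    show ?thesis using bext_triple(2)[OF U3 A', of j'] j' 0 A'0j by (simp add: V_def)
  next
    case (Suc i')
    show ?thesis
    proof (cases j)
      case 0
      show ?thesis using bext_triple(3)[OF U3 A', of i'] Suc 0 ij A'i0 by (simp add: V_def)
    next
      case (Suc j')
      show ?thesis using bext_triple(1)[OF U3 A', of i' j'] Suc \<open>i = Suc i'\<close> ij diag3
        by (simp add: V_def A3_def)
    qed
  qed
  define U where "U = W * V"
  have U: "U \<in> carrier_mat (Suc m) (Suc m)" unfolding U_def using W V by simp
  have tU: "transpose_mat U = transpose_mat V * transpose_mat W" unfolding U_def using W V
    by (simp add: transpose_mult)
  have tW: "transpose_mat W \<in> carrier_mat (Suc m) (Suc m)" using W by simp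
  have tV: "transpose_mat V \<in> carrier_mat (Suc m) (Suc m)" using V by simp
  have "transpose_mat U * U = transpose_mat V * transpose_mat W * (W * V)" using tU U_def by simp
  also have "\<dots> = transpose_mat V * (transpose_mat W * (W * V))" using assoc_mult_mat[OF tV tW, of "W*V" "Suc m"] W V by simp
  also have "transpose_mat W * (W * V) = (transpose_mat W * W) * V" using assoc_mult_mat[OF tW W V] by simp
  also have "\<dots> = V" using WW V by simp
  finally have UU: "transpose_mat U * U = 1\<^sub>m (Suc m)" using VV by simp
  have "U * transpose_mat U = W * V * (transpose_mat V * transpose_mat W)" using tU U_def by simp
  also have "\<dots> = W * (V * (transpose_mat V * transpose_mat W))" using assoc_mult_mat[OF W V, of "transpose_mat V * transpose_mat W" "Suc m"] tV tW by simp
  also have "V * (transpose_mat V * transpose_mat W) = (V * transpose_mat V) * transpose_mat W" using assoc_mult_mat[OF V tV tW] by simp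
  also have "\<dots> = transpose_mat W" using VV' tW by simp
  finally have UU': "U * transpose_mat U = 1\<^sub>m (Suc m)" using WW' by simp
  have SW: "S * W \<in> carrier_mat (Suc m) (Suc m)" using S W by simp
  have "transpose_mat U * S * U = transpose_mat V * transpose_mat W * S * (W * V)" using tU U_def by simp
  also have "\<dots> = transpose_mat V * (transpose_mat W * S * W) * V" 
  proof -
    have tWS: "transpose_mat W * S \<in> carrier_mat (Suc m) (Suc m)" using tW S by simp
    have "transpose_mat V * transpose_mat W * S = transpose_mat V * (transpose_mat W * S)"
      using assoc_mult_mat[OF tV tW S] .
    hence "transpose_mat V * transpose_mat W * S * (W * V) = transpose_mat V * (transpose_mat W * S) * (W * V)" by simp
    also have "\<dots> = transpose_mat V * ((transpose_mat W * S) * (W * V))"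
      using assoc_mult_mat[OF tV tWS, of "W*V" "Suc m"] W V by simp
    also have "(transpose_mat W * S) * (W * V) = (transpose_mat W * S * W) * V"
      using assoc_mult_mat[OF tWS W V] by simp
    also have "transpose_mat V * ((transpose_mat W * S * W) * V) = transpose_mat V * (transpose_mat W * S * W) * V"
      using assoc_mult_mat[OF tV, of "transpose_mat W * S * W" "Suc m" V "Suc m"] tWS W V by simp
    finally show ?thesis .
  qed
  finally have "transpose_mat U * S * U = transpose_mat V * A' * V" unfolding A'_def .
  hence "\<forall>i<Suc m. \<forall>j<Suc m. i \<noteq> j \<longrightarrow> (transpose_mat U * S * U) $$ (i,j) = 0" using diagV by simp
  with U UU UU' show ?case by blast
qed



definition nsq :: "nat \<Rightarrow> (nat \<Rightarrow> real) \<Rightarrow> real" where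
  "nsq n x = (\<Sum>i<n. (x i)^2)"

definition mv :: "real mat \<Rightarrow> nat \<Rightarrow> (nat \<Rightarrow> real) \<Rightarrow> nat \<Rightarrow> real" where
  "mv A n x i = (\<Sum>l<n. A $$ (i,l) * x l)"

lemma prod_list_map_upt0: "prod_list (map f [0..<n]) = (\<Prod>i<n. f i)"
  by (induction n) (auto simp: lessThan_Suc mult.commute)

lemma gram_decomp:
  fixes A :: "real mat"
  assumes A: "A \<in> carrier_mat m n"
  shows "\<exists>u lam. (\<forall>j<n. \<forall>k<n. (\<Sum>i<n. u j i * u k i) = (if j = k then 1 else 0))
    \<and> (\<forall>i<n. \<forall>l<n. (\<Sum>k<n. u k i * u k l) = (if i = l then 1 else 0))
    \<and> (\<forall>j<n. \<forall>k<n. (\<Sum>i<m. mv A n (u j) i * mv A n (u k) i) = (if j = k then lam k else 0))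
    \<and> char_poly (transpose_mat A * A) = (\<Prod>k<n. [:- lam k, 1:])"
proof -
  define G where "G = transpose_mat A * A"
  have G: "G \<in> carrier_mat n n" unfolding G_def using A by simp
  have Gsym: "transpose_mat G = G" unfolding G_def using A by (simp add: transpose_mult)
  have Gij: "G $$ (l,l') = (\<Sum>i<m. A $$ (i,l) * A $$ (i,l'))" if "l < n" "l' < n" for l l'
    unfolding G_def using A that by (subst mat_mult_idx[of _ n m _ n]) auto
  obtain U where U: "U \<in> carrier_mat n n" and UU: "transpose_mat U * U = 1\<^sub>m n"
    and UU': "U * transpose_mat U = 1\<^sub>m n"
    and diag: "\<forall>i<n. \<forall>j<n. i \<noteq> j \<longrightarrow> (transpose_mat U * G * U) $$ (i,j) = 0"
    using spectral[OF G Gsym] by auto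
  define D where "D = transpose_mat U * G * U"
  have D: "D \<in> carrier_mat n n" unfolding D_def using U G by simp
  have tU: "transpose_mat U \<in> carrier_mat n n" using U by simp
  define u where "u = (\<lambda>k i. U $$ (i,k))"
  define lam where "lam = (\<lambda>k. D $$ (k,k))"
  have o1: "(\<Sum>i<n. u j i * u k i) = (if j = k then 1 else 0)" if "j < n" "k < n" for j k
  proof -
    have "(transpose_mat U * U) $$ (j,k) = (\<Sum>i<n. transpose_mat U $$ (j,i) * U $$ (i,k))"
      using U tU that by (intro mat_mult_idx) auto
    thus ?thesis using UU U that unfolding u_def by simp
  qed
  have o2: "(\<Sum>k<n. u k i * u k l) = (if i = l then 1 else 0)" if "i < n" "l < n" for i l
  proof -
    have "(U * transpose_mat U) $$ (i,l) = (\<Sum>k<n. U $$ (i,k) * transpose_mat U $$ (k,l))"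
      using U tU that by (intro mat_mult_idx) auto
    thus ?thesis using UU' U that unfolding u_def by simp
  qed
  have GUD: "G * U = U * D"
  proof -
    have "U * D = U * (transpose_mat U * G * U)" unfolding D_def ..
    also have "\<dots> = U * (transpose_mat U * (G * U))" using assoc_mult_mat[OF tU G U] by simp
    also have "\<dots> = (U * transpose_mat U) * (G * U)" using assoc_mult_mat[OF U tU, of "G * U" n] G U by simp
    also have "\<dots> = G * U" using UU' G U by simp
    finally show ?thesis by simp
  qed
  have GU: "(\<Sum>l'<n. G $$ (l,l') * u k l') = lam k * u k l" if "l < n" "k < n" for l k
  proof -
    have "(G * U) $$ (l,k) = (\<Sum>l'<n. G $$ (l,l') * U $$ (l',k))" using G U that by (intro mat_mult_idx) auto
    moreover have "(U * D) $$ (l,k) = (\<Sum>j<n. U $$ (l,j) * D $$ (j,k))" using D U that by (intro mat_mult_idx) auto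
    moreover have "(\<Sum>j<n. U $$ (l,j) * D $$ (j,k)) = U $$ (l,k) * D $$ (k,k)"
      using that diag unfolding D_def by (subst sum.remove[of _ k]) auto
    ultimately show ?thesis using GUD unfolding u_def lam_def by (simp add: mult.commute)
  qed
  have o3: "(\<Sum>i<m. mv A n (u j) i * mv A n (u k) i) = (if j = k then lam k else 0)" if jk: "j < n" "k < n" for j k
  proof -
    have "(\<Sum>i<m. mv A n (u j) i * mv A n (u k) i) = 
      (\<Sum>i<m. \<Sum>l<n. \<Sum>l'<n. u j l * (A $$ (i,l) * A $$ (i,l')) * u k l')"
      unfolding mv_def sum_product by (intro sum.cong refl) (simp add: algebra_simps)
    also have "\<dots> = (\<Sum>l<n. \<Sum>l'<n. \<Sum>i<m. u j l * (A $$ (i,l) * A $$ (i,l')) * u k l')"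
      by (subst sum.swap) (simp add: sum.swap[of _ "{..<m}"])
    also have "\<dots> = (\<Sum>l<n. u j l * (\<Sum>l'<n. G $$ (l,l') * u k l'))"
      by (intro sum.cong refl) (simp add: Gij sum_distrib_left sum_distrib_right algebra_simps)
    also have "\<dots> = (\<Sum>l<n. u j l * (lam k * u k l))" using GU jk by simp
    also have "\<dots> = lam k * (\<Sum>l<n. u j l * u k l)" by (simp add: sum_distrib_left algebra_simps)
    also have "\<dots> = (if j = k then lam k else 0)" using o1 jk by simp
    finally show ?thesis .
  qed
  have "similar_mat_wit G D U (transpose_mat U)"
  proof -
    have "U * D * transpose_mat U = U * transpose_mat U * (G * (U * transpose_mat U))"
      unfolding D_def using U tU G
      by (simp add: assoc_mult_mat[of _ n n _ n _ n])
    also have "\<dots> = G" using UU' G by simp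
    finally show ?thesis unfolding similar_mat_wit_def using G D U tU UU UU' by (auto simp: Let_def)
  qed
  hence "char_poly G = char_poly D" using char_poly_similar unfolding similar_mat_def by blast
  also have "char_poly D = (\<Prod>a\<leftarrow>diag_mat D. [:- a, 1:])"
    using char_poly_upper_triangular[OF D] diag D unfolding upper_triangular_def D_def by auto
  also have "\<dots> = (\<Prod>k<n. [:- lam k, 1:])" unfolding diag_mat_def lam_def using D
    by (simp add: prod_list_map_upt0)
  finally have "char_poly (transpose_mat A * A) = (\<Prod>k<n. [:- lam k, 1:])" unfolding G_def .
  with o1 o2 o3 show ?thesis by blast
qed



definition gdec :: "real mat \<Rightarrow> nat \<Rightarrow> nat \<Rightarrow> (nat \<Rightarrow> nat \<Rightarrow> real) \<Rightarrow> (nat \<Rightarrow> real) \<Rightarrow> bool" where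
  "gdec A m n u lam \<longleftrightarrow> (\<forall>j<n. \<forall>k<n. (\<Sum>i<n. u j i * u k i) = (if j = k then 1 else 0))
    \<and> (\<forall>i<n. \<forall>l<n. (\<Sum>k<n. u k i * u k l) = (if i = l then 1 else 0))
    \<and> (\<forall>j<n. \<forall>k<n. (\<Sum>i<m. mv A n (u j) i * mv A n (u k) i) = (if j = k then lam k else 0))
    \<and> nuc_norm A = (\<Sum>k<n. sqrt (lam k))
    \<and> spec_norm A = Max (insert 0 ((\<lambda>k. sqrt (lam k)) ` {..<n}))"

lemma order_prod_linear:
  fixes lam :: "nat \<Rightarrow> real"
  shows "Polynomial.order t (\<Prod>k<n. [:- lam k, 1:]) = card {k. k < n \<and> lam k = t}"
proof (induction n)
  case 0 thus ?case by simp
next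
  case (Suc n)
  have nz: "(\<Prod>k<n. [:- lam k, 1:]) \<noteq> 0" by (simp add: prod_zero_iff)
  have "(\<Prod>k<Suc n. [:- lam k, 1:]) = (\<Prod>k<n. [:- lam k, 1:]) * [:- lam n, 1:]" by simp
  moreover have "(\<Prod>k<n. [:- lam k, 1:]) * [:- lam n, 1:] \<noteq> 0"
  proof -
    have "[:- lam n, 1:] \<noteq> 0" by simp
    thus ?thesis using nz no_zero_divisors by blast
  qed
  ultimately have "Polynomial.order t (\<Prod>k<Suc n. [:- lam k, 1:]) = Polynomial.order t (\<Prod>k<n. [:- lam k, 1:]) + Polynomial.order t [:- lam n, 1:]"
    using order_mult by metis
  also have "Polynomial.order t [:- lam n, 1:] = (if lam n = t then 1 else 0)" by (simp add: order_linear')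
  also have "{k. k < Suc n \<and> lam k = t} = {k. k < n \<and> lam k = t} \<union> (if lam n = t then {n} else {})"
    by (auto simp: less_Suc_eq)
  hence "card {k. k < Suc n \<and> lam k = t} = card {k. k < n \<and> lam k = t} + (if lam n = t then 1 else 0)"
    by (auto simp: card_insert_if)
  ultimately show ?case using Suc.IH by simp
qed

lemma gdec_exists:
  assumes A: "A \<in> carrier_mat m n"
  shows "\<exists>u lam. gdec A m n u lam"
proof -
  obtain u lam where o1: "\<forall>j<n. \<forall>k<n. (\<Sum>i<n. u j i * u k i) = (if j = k then 1 else 0)"
    and o2: "\<forall>i<n. \<forall>l<n. (\<Sum>k<n. u k i * u k l) = (if i = l then 1 else 0)"
    and o3: "\<forall>j<n. \<forall>k<n. (\<Sum>i<m. mv A n (u j) i * mv A n (u k) i) = (if j = k then lam k else 0)"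
    and cp: "char_poly (transpose_mat A * A) = (\<Prod>k<n. [:- lam k, 1:])"
    using gram_decomp[OF A] by blast
  have ge: "gram_eigs A = lam ` {..<n}"
    unfolding gram_eigs_def cp by (auto simp: poly_prod prod_zero_iff)
  have "nuc_norm A = (\<Sum>t\<in>lam ` {..<n}. real (card {k. k < n \<and> lam k = t}) * sqrt t)"
    unfolding nuc_norm_def ge cp order_prod_linear ..
  also have "\<dots> = (\<Sum>t\<in>lam ` {..<n}. (\<Sum>k\<in>{k\<in>{..<n}. lam k = t}. sqrt (lam k)))"
    by (intro sum.cong refl) auto
  also have "\<dots> = (\<Sum>k<n. sqrt (lam k))"
    by (rule sum.image_gen[symmetric]) auto
  finally have nuc: "nuc_norm A = (\<Sum>k<n. sqrt (lam k))" .
  have spec: "spec_norm A = Max (insert 0 ((\<lambda>k. sqrt (lam k)) ` {..<n}))"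
    unfolding spec_norm_def ge by (simp add: image_image)
  show ?thesis unfolding gdec_def using o1 o2 o3 nuc spec by blast
qed

lemma cs_sq:
  fixes f g :: "nat \<Rightarrow> real"
  assumes "finite I"
  shows "(\<Sum>i\<in>I. f i * g i)^2 \<le> (\<Sum>i\<in>I. (f i)^2) * (\<Sum>i\<in>I. (g i)^2)"
proof -
  have "0 \<le> (\<Sum>i\<in>I. \<Sum>j\<in>I. (f i * g j - f j * g i)^2)" by (intro sum_nonneg) auto
  also have "\<dots> = (\<Sum>i\<in>I. \<Sum>j\<in>I. (f i)^2 * (g j)^2 + (f j)^2 * (g i)^2 - 2 * ((f i * g i) * (f j * g j)))"
    by (intro sum.cong refl) (simp add: power2_eq_square algebra_simps)
  also have "\<dots> = (\<Sum>i\<in>I. \<Sum>j\<in>I. (f i)^2 * (g j)^2) + (\<Sum>i\<in>I. \<Sum>j\<in>I. (g i)^2 * (f j)^2)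
      - 2 * (\<Sum>i\<in>I. \<Sum>j\<in>I. (f i * g i) * (f j * g j))"
    by (simp add: sum.distrib sum_subtractf sum_distrib_left mult.commute)
  also have "(\<Sum>i\<in>I. \<Sum>j\<in>I. (f i)^2 * (g j)^2) = (\<Sum>i\<in>I. (f i)^2) * (\<Sum>i\<in>I. (g i)^2)"
    by (simp add: sum_product)
  also have "(\<Sum>i\<in>I. \<Sum>j\<in>I. (g i)^2 * (f j)^2) = (\<Sum>i\<in>I. (g i)^2) * (\<Sum>i\<in>I. (f i)^2)"
    by (simp add: sum_product)
  also have "(\<Sum>i\<in>I. \<Sum>j\<in>I. (f i * g i) * (f j * g j)) = (\<Sum>i\<in>I. f i * g i)^2"
    by (simp add: sum_product power2_eq_square)
  finally show ?thesis by (simp add: mult.commute)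
qed

lemma cs:
  fixes f g :: "nat \<Rightarrow> real"
  assumes "finite I"
  shows "(\<Sum>i\<in>I. f i * g i) \<le> sqrt (\<Sum>i\<in>I. (f i)^2) * sqrt (\<Sum>i\<in>I. (g i)^2)"
proof -
  have "\<bar>\<Sum>i\<in>I. f i * g i\<bar> = sqrt ((\<Sum>i\<in>I. f i * g i)^2)" by simp
  also have "\<dots> \<le> sqrt ((\<Sum>i\<in>I. (f i)^2) * (\<Sum>i\<in>I. (g i)^2))"
    using cs_sq[OF assms] by (rule real_sqrt_le_mono)
  also have "\<dots> = sqrt (\<Sum>i\<in>I. (f i)^2) * sqrt (\<Sum>i\<in>I. (g i)^2)" by (rule real_sqrt_mult)
  finally show ?thesis by simp
qed

definition pairm :: "real mat \<Rightarrow> real mat \<Rightarrow> nat \<Rightarrow> nat \<Rightarrow> real" where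
  "pairm W A m n = (\<Sum>i<m. \<Sum>j<n. W $$ (i,j) * A $$ (i,j))"

definition contr :: "real mat \<Rightarrow> nat \<Rightarrow> nat \<Rightarrow> bool" where
  "contr W m n \<longleftrightarrow> (\<forall>x. nsq m (mv W n x) \<le> nsq n x)"

lemma mv_lin: "mv W n (\<lambda>l. x l - c * y l) i = mv W n x i - c * mv W n y i"
  unfolding mv_def by (simp add: sum_subtractf sum_distrib_left algebra_simps)

definition coef :: "(nat \<Rightarrow> nat \<Rightarrow> real) \<Rightarrow> nat \<Rightarrow> (nat \<Rightarrow> real) \<Rightarrow> nat \<Rightarrow> real" where
  "coef u n x k = (\<Sum>i<n. u k i * x i)"

context
  fixes A :: "real mat" and m n :: nat and u :: "nat \<Rightarrow> nat \<Rightarrow> real" and lam :: "nat \<Rightarrow> real"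
  assumes gd: "gdec A m n u lam"
begin

lemma g_o1: "j < n \<Longrightarrow> k < n \<Longrightarrow> (\<Sum>i<n. u j i * u k i) = (if j = k then 1 else 0)"
  using gd unfolding gdec_def by blast
lemma g_o2: "i < n \<Longrightarrow> l < n \<Longrightarrow> (\<Sum>k<n. u k i * u k l) = (if i = l then 1 else 0)"
  using gd unfolding gdec_def by blast
lemma g_o3: "j < n \<Longrightarrow> k < n \<Longrightarrow> (\<Sum>i<m. mv A n (u j) i * mv A n (u k) i) = (if j = k then lam k else 0)"
  using gd unfolding gdec_def by blast
lemma g_nuc: "nuc_norm A = (\<Sum>k<n. sqrt (lam k))"
  using gd unfolding gdec_def by blast
lemma g_spec: "spec_norm A = Max (insert 0 ((\<lambda>k. sqrt (lam k)) ` {..<n}))"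
  using gd unfolding gdec_def by blast

lemma g_lam_nonneg: "k < n \<Longrightarrow> lam k \<ge> 0"
  using g_o3[of k k] by (metis (no_types, lifting) power2_eq_square sum_nonneg zero_le_power2)

lemma g_spec_ge: "k < n \<Longrightarrow> sqrt (lam k) \<le> spec_norm A"
  unfolding g_spec by (intro Max_ge) auto

lemma g_spec_nonneg: "spec_norm A \<ge> 0"
  unfolding g_spec by (intro Max_ge) auto

lemma g_expand: "l < n \<Longrightarrow> x l = (\<Sum>k<n. coef u n x k * u k l)"
proof -
  assume l: "l < n"
  have "(\<Sum>k<n. coef u n x k * u k l) = (\<Sum>k<n. \<Sum>i<n. x i * (u k i * u k l))"
    unfolding coef_def by (intro sum.cong refl) (simp add: sum_distrib_left sum_distrib_right mult_ac)
  also have "\<dots> = (\<Sum>i<n. \<Sum>k<n. x i * (u k i * u k l))" by (rule sum.swap)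
  also have "\<dots> = (\<Sum>i<n. x i * (\<Sum>k<n. u k i * u k l))" by (simp add: sum_distrib_left)
  also have "\<dots> = (\<Sum>i<n. if i = l then x i else 0)" using l by (intro sum.cong refl) (simp add: g_o2)
  also have "\<dots> = x l" using l by simp
  finally show ?thesis by simp
qed

lemma g_mv: "mv W n x i = (\<Sum>k<n. coef u n x k * mv W n (u k) i)"
proof -
  have "mv W n x i = (\<Sum>l<n. W $$ (i,l) * (\<Sum>k<n. coef u n x k * u k l))"
    unfolding mv_def by (intro sum.cong refl) (simp add: g_expand[symmetric])
  also have "\<dots> = (\<Sum>l<n. \<Sum>k<n. coef u n x k * (W $$ (i,l) * u k l))"
    by (simp add: sum_distrib_left algebra_simps)
  also have "\<dots> = (\<Sum>k<n. \<Sum>l<n. coef u n x k * (W $$ (i,l) * u k l))" by (rule sum.swap)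
  also have "\<dots> = (\<Sum>k<n. coef u n x k * mv W n (u k) i)"
    unfolding mv_def by (simp add: sum_distrib_left)
  finally show ?thesis .
qed

lemma g_sq: "(\<Sum>i<m. (\<Sum>k<n. g k * mv A n (u k) i)^2) = (\<Sum>k<n. (g k)^2 * lam k)"
proof -
  have "(\<Sum>i<m. (\<Sum>k<n. g k * mv A n (u k) i)^2) = 
     (\<Sum>j<n. \<Sum>k<n. g j * g k * (\<Sum>i<m. mv A n (u j) i * mv A n (u k) i))"
  proof -
    have "(\<Sum>i<m. (\<Sum>k<n. g k * mv A n (u k) i)^2) = (\<Sum>i<m. \<Sum>j<n. \<Sum>k<n. g j * g k * (mv A n (u j) i * mv A n (u k) i))"
      by (simp add: power2_eq_square sum_product algebra_simps)
    also have "\<dots> = (\<Sum>j<n. \<Sum>i<m. \<Sum>k<n. g j * g k * (mv A n (u j) i * mv A n (u k) i))" by (rule sum.swap)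
    also have "\<dots> = (\<Sum>j<n. \<Sum>k<n. \<Sum>i<m. g j * g k * (mv A n (u j) i * mv A n (u k) i))" 
      by (intro sum.cong refl sum.swap)
    finally show ?thesis by (simp add: sum_distrib_left)
  qed
  also have "\<dots> = (\<Sum>j<n. \<Sum>k<n. if j = k then g j * g k * lam k else 0)"
    by (intro sum.cong refl) (simp add: g_o3)
  also have "\<dots> = (\<Sum>k<n. (g k)^2 * lam k)" by (simp add: power2_eq_square)
  finally show ?thesis .
qed

lemma g_nsqA: "nsq m (mv A n x) = (\<Sum>k<n. lam k * (coef u n x k)^2)"
proof -
  have "nsq m (mv A n x) = (\<Sum>i<m. (\<Sum>k<n. coef u n x k * mv A n (u k) i)^2)"
    unfolding nsq_def using g_mv[of A x] by presburger
  also have "\<dots> = (\<Sum>k<n. (coef u n x k)^2 * lam k)" by (rule g_sq)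
  finally show ?thesis by (simp add: mult.commute)
qed

lemma g_nsq: "nsq n x = (\<Sum>k<n. (coef u n x k)^2)"
proof -
  have "nsq n x = (\<Sum>l<n. x l * (\<Sum>k<n. coef u n x k * u k l))"
    unfolding nsq_def power2_eq_square by (intro sum.cong refl) (simp add: g_expand[symmetric])
  also have "\<dots> = (\<Sum>l<n. \<Sum>k<n. coef u n x k * (u k l * x l))"
    by (simp add: sum_distrib_left sum_distrib_right mult.commute mult.left_commute)
  also have "\<dots> = (\<Sum>k<n. \<Sum>l<n. coef u n x k * (u k l * x l))" by (rule sum.swap)
  also have "\<dots> = (\<Sum>k<n. coef u n x k * coef u n x k)"
    unfolding coef_def by (simp add: sum_distrib_left)
  finally show ?thesis by (simp add: power2_eq_square)
qed

lemma g_nsq_u: "k < n \<Longrightarrow> nsq n (u k) = 1"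
  unfolding nsq_def power2_eq_square using g_o1[of k k] by simp

lemma g_nsqAu: "k < n \<Longrightarrow> nsq m (mv A n (u k)) = lam k"
  unfolding nsq_def power2_eq_square using g_o3[of k k] by simp

lemma g_pair: "pairm W A m n = (\<Sum>k<n. \<Sum>i<m. mv W n (u k) i * mv A n (u k) i)"
proof -
  have "(\<Sum>k<n. \<Sum>i<m. mv W n (u k) i * mv A n (u k) i) =
     (\<Sum>k<n. \<Sum>i<m. \<Sum>l<n. \<Sum>l'<n. W $$ (i,l) * A $$ (i,l') * (u k l * u k l'))"
    unfolding mv_def sum_product by (intro sum.cong refl) (simp add: algebra_simps)
  also have "\<dots> = (\<Sum>i<m. \<Sum>k<n. \<Sum>l<n. \<Sum>l'<n. W $$ (i,l) * A $$ (i,l') * (u k l * u k l'))"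
    by (rule sum.swap)
  also have "\<dots> = (\<Sum>i<m. \<Sum>l<n. \<Sum>k<n. \<Sum>l'<n. W $$ (i,l) * A $$ (i,l') * (u k l * u k l'))"
    by (intro sum.cong refl sum.swap)
  also have "\<dots> = (\<Sum>i<m. \<Sum>l<n. \<Sum>l'<n. \<Sum>k<n. W $$ (i,l) * A $$ (i,l') * (u k l * u k l'))"
    by (intro sum.cong refl sum.swap)
  also have "\<dots> = (\<Sum>i<m. \<Sum>l<n. \<Sum>l'<n. W $$ (i,l) * A $$ (i,l') * (\<Sum>k<n. u k l * u k l'))"
    by (simp add: sum_distrib_left)
  also have "\<dots> = (\<Sum>i<m. \<Sum>l<n. \<Sum>l'<n. if l = l' then W $$ (i,l) * A $$ (i,l') else 0)"
    by (intro sum.cong refl) (simp add: g_o2)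
  also have "\<dots> = pairm W A m n" unfolding pairm_def by simp
  finally show ?thesis by simp
qed

lemma g_term_bound:
  assumes k: "k < n"
  shows "(\<Sum>i<m. mv W n (u k) i * mv A n (u k) i) \<le> sqrt (nsq m (mv W n (u k))) * sqrt (lam k)"
proof -
  have "(\<Sum>i<m. mv W n (u k) i * mv A n (u k) i) \<le> sqrt (nsq m (mv W n (u k))) * sqrt (nsq m (mv A n (u k)))"
    unfolding nsq_def by (rule cs) simp
  thus ?thesis using g_nsqAu[OF k] by simp
qed

lemma g_ub:
  assumes W: "contr W m n"
  shows "pairm W A m n \<le> nuc_norm A"
proof -
  have "pairm W A m n \<le> (\<Sum>k<n. sqrt (lam k))"
    unfolding g_pair
  proof (rule sum_mono)
    fix k assume "k \<in> {..<n}" hence k: "k < n" by simp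
    have "nsq m (mv W n (u k)) \<le> 1" using W g_nsq_u[OF k] unfolding contr_def by metis
    hence "sqrt (nsq m (mv W n (u k))) \<le> 1" by simp
    hence "sqrt (nsq m (mv W n (u k))) * sqrt (lam k) \<le> 1 * sqrt (lam k)"
      using g_lam_nonneg[OF k] by (intro mult_right_mono) auto
    thus "(\<Sum>i<m. mv W n (u k) i * mv A n (u k) i) \<le> sqrt (lam k)"
      using g_term_bound[OF k, of W] by linarith
  qed
  thus ?thesis using g_nuc by simp
qed

lemma g_specv: "nsq m (mv A n x) \<le> (spec_norm A)^2 * nsq n x"
proof -
  have "nsq m (mv A n x) = (\<Sum>k<n. lam k * (coef u n x k)^2)" by (rule g_nsqA)
  also have "\<dots> \<le> (\<Sum>k<n. (spec_norm A)^2 * (coef u n x k)^2)"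
  proof (rule sum_mono)
    fix k assume "k \<in> {..<n}" hence k: "k < n" by simp
    have "lam k = (sqrt (lam k))^2" using g_lam_nonneg[OF k] by simp
    also have "\<dots> \<le> (spec_norm A)^2" using g_spec_ge[OF k] g_lam_nonneg[OF k] by (intro power_mono) auto
    finally show "lam k * (coef u n x k)^2 \<le> (spec_norm A)^2 * (coef u n x k)^2"
      by (intro mult_right_mono) auto
  qed
  also have "\<dots> = (spec_norm A)^2 * nsq n x" by (simp add: g_nsq sum_distrib_left)
  finally show ?thesis .
qed

lemma sqrt_one_minus: assumes "0 \<le> t" "t \<le> 1" shows "sqrt (1 - t) \<le> 1 - t / 2"
proof -
  have "(1 - t) \<le> (1 - t/2)^2" by (simp add: power2_eq_square algebra_simps)
  hence "sqrt (1 - t) \<le> sqrt ((1 - t/2)^2)" by (rule real_sqrt_le_mono)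
  also have "\<dots> = 1 - t/2" using assms by simp
  finally show ?thesis .
qed

lemma g_key:
  assumes W: "contr W m n" and Wb: "\<forall>i<m. mv W n b i = 0" and b1: "nsq n b = 1"
    and sp: "spec_norm A > 0"
  shows "pairm W A m n \<le> nuc_norm A - nsq m (mv A n b) / (2 * spec_norm A)"
proof -
  define be where "be = coef u n b"
  have tb: "(\<Sum>i<m. mv W n (u k) i * mv A n (u k) i) \<le> sqrt (lam k) - sqrt (lam k) * (be k)^2 / 2"
    if k: "k < n" for k
  proof -
    let ?y = "\<lambda>l. u k l - be k * b l"
    have Wuy: "mv W n (u k) i = mv W n ?y i" if "i < m" for i
      using Wb that by (simp add: mv_lin)
    have "nsq m (mv W n (u k)) = nsq m (mv W n ?y)" unfolding nsq_def using Wuy by simp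
    also have "\<dots> \<le> nsq n ?y" using W unfolding contr_def by blast
    also have "nsq n ?y = nsq n (u k) - 2 * be k * (\<Sum>l<n. u k l * b l) + (be k)^2 * nsq n b"
      unfolding nsq_def by (simp add: power2_diff sum.distrib sum_subtractf sum_distrib_left power_mult_distrib algebra_simps)
    also have "\<dots> = 1 - (be k)^2" using g_nsq_u[OF k] b1 unfolding be_def coef_def by (simp add: power2_eq_square)
    finally have le: "nsq m (mv W n (u k)) \<le> 1 - (be k)^2" .
    have nn: "nsq m (mv W n (u k)) \<ge> 0" unfolding nsq_def by (simp add: sum_nonneg)
    have "sqrt (nsq m (mv W n (u k))) \<le> sqrt (1 - (be k)^2)" using le by (rule real_sqrt_le_mono)
    also have "\<dots> \<le> 1 - (be k)^2 / 2" using le nn by (intro sqrt_one_minus) auto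
    finally have "sqrt (nsq m (mv W n (u k))) * sqrt (lam k) \<le> (1 - (be k)^2 / 2) * sqrt (lam k)"
      using g_lam_nonneg[OF k] by (intro mult_right_mono) auto
    thus ?thesis using g_term_bound[OF k, of W] by (simp add: algebra_simps)
  qed
  have "pairm W A m n \<le> (\<Sum>k<n. sqrt (lam k) - sqrt (lam k) * (be k)^2 / 2)"
    unfolding g_pair by (rule sum_mono) (use tb in auto)
  also have "\<dots> = nuc_norm A - (\<Sum>k<n. sqrt (lam k) * (be k)^2) / 2"
    using g_nuc by (simp add: sum_subtractf sum_divide_distrib)
  finally have p: "pairm W A m n \<le> nuc_norm A - (\<Sum>k<n. sqrt (lam k) * (be k)^2) / 2" .
  have "nsq m (mv A n b) = (\<Sum>k<n. lam k * (be k)^2)" unfolding be_def by (rule g_nsqA)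
  also have "\<dots> \<le> (\<Sum>k<n. spec_norm A * (sqrt (lam k) * (be k)^2))"
  proof (rule sum_mono)
    fix k assume "k \<in> {..<n}" hence k: "k < n" by simp
    have "lam k = sqrt (lam k) * sqrt (lam k)" using g_lam_nonneg[OF k] by simp
    also have "\<dots> \<le> spec_norm A * sqrt (lam k)" using g_spec_ge[OF k] g_lam_nonneg[OF k] by (intro mult_right_mono) auto
    finally show "lam k * (be k)^2 \<le> spec_norm A * (sqrt (lam k) * (be k)^2)"
      by (metis mult.assoc mult_right_mono zero_le_power2)
  qed
  also have "\<dots> = spec_norm A * (\<Sum>k<n. sqrt (lam k) * (be k)^2)" by (simp add: sum_distrib_left)
  finally have "nsq m (mv A n b) / (2 * spec_norm A) \<le> (\<Sum>k<n. sqrt (lam k) * (be k)^2) / 2"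
    using sp by (simp add: divide_simps mult.commute)
  with p show ?thesis by linarith
qed

lemma g_att:
  shows "\<exists>W \<in> carrier_mat m n. contr W m n \<and> pairm W A m n = nuc_norm A \<and>
     (\<forall>b. (\<forall>i<m. mv A n b i = 0) \<longrightarrow> (\<forall>i<m. mv W n b i = 0))"
proof -
  define c where "c = (\<lambda>k. if lam k > 0 then 1 / sqrt (lam k) else 0)"
  define W where "W = mat m n (\<lambda>(i,l). \<Sum>k<n. c k * mv A n (u k) i * u k l)"
  have Wc: "W \<in> carrier_mat m n" unfolding W_def by simp
  have Wx: "mv W n x i = (\<Sum>k<n. (c k * coef u n x k) * mv A n (u k) i)" if i: "i < m" for x i
  proof -
    have "mv W n x i = (\<Sum>l<n. \<Sum>k<n. c k * mv A n (u k) i * (u k l * x l))"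
      unfolding mv_def W_def using i by (intro sum.cong refl) (simp add: sum_distrib_left sum_distrib_right mult_ac)
    also have "\<dots> = (\<Sum>k<n. \<Sum>l<n. c k * mv A n (u k) i * (u k l * x l))" by (rule sum.swap)
    also have "\<dots> = (\<Sum>k<n. (c k * coef u n x k) * mv A n (u k) i)"
      unfolding coef_def by (simp add: sum_distrib_left mult_ac)
    finally show ?thesis .
  qed
  have cl: "(c k)^2 * lam k \<le> 1" if k: "k < n" for k
  proof (cases "lam k > 0")
    case True
    hence "(c k)^2 * lam k = lam k / (sqrt (lam k))^2" unfolding c_def by (simp add: power_divide)
    also have "\<dots> = 1" using True by simp
    finally show ?thesis by simp
  qed (simp add: c_def)
  have nsqW: "nsq m (mv W n x) = (\<Sum>k<n. (c k * coef u n x k)^2 * lam k)" for x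
  proof -
    have "nsq m (mv W n x) = (\<Sum>i<m. (\<Sum>k<n. (c k * coef u n x k) * mv A n (u k) i)^2)"
      unfolding nsq_def by (intro sum.cong refl) (simp add: Wx)
    also have "\<dots> = (\<Sum>k<n. (c k * coef u n x k)^2 * lam k)" by (rule g_sq)
    finally show ?thesis .
  qed
  have contrW: "contr W m n" unfolding contr_def
  proof
    fix x
    have "nsq m (mv W n x) = (\<Sum>k<n. ((c k)^2 * lam k) * (coef u n x k)^2)"
      unfolding nsqW by (simp add: power_mult_distrib mult_ac)
    also have "\<dots> \<le> (\<Sum>k<n. 1 * (coef u n x k)^2)"
      by (rule sum_mono) (intro mult_right_mono, auto simp: cl)
    also have "\<dots> = nsq n x" by (simp add: g_nsq)
    finally show "nsq m (mv W n x) \<le> nsq n x" .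
  qed
  have Wu: "mv W n (u k) i = c k * mv A n (u k) i" if k: "k < n" and i: "i < m" for k i
  proof -
    have "mv W n (u k) i = (\<Sum>j<n. (c j * coef u n (u k) j) * mv A n (u j) i)" using Wx[OF i] .
    also have "\<dots> = (\<Sum>j<n. if j = k then c k * mv A n (u k) i else 0)"
      using k by (intro sum.cong refl) (simp add: coef_def g_o1)
    finally show ?thesis using k by simp
  qed
  have "pairm W A m n = (\<Sum>k<n. \<Sum>i<m. (c k * mv A n (u k) i) * mv A n (u k) i)"
    unfolding g_pair by (intro sum.cong refl) (simp add: Wu)
  also have "\<dots> = (\<Sum>k<n. c k * lam k)"
    by (intro sum.cong refl) (simp add: g_o3 sum_distrib_left[symmetric] mult.assoc)
  also have "\<dots> = (\<Sum>k<n. sqrt (lam k))"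
  proof (intro sum.cong refl)
    fix k assume "k \<in> {..<n}" hence k: "k < n" by simp
    show "c k * lam k = sqrt (lam k)"
    proof (cases "lam k > 0")
      case True
      then show ?thesis unfolding c_def by (simp add: real_div_sqrt)
    next
      case False thus ?thesis using g_lam_nonneg[OF k] unfolding c_def by simp
    qed
  qed
  finally have pW: "pairm W A m n = nuc_norm A" using g_nuc by simp
  have nullW: "\<forall>i<m. mv W n b i = 0" if Ab: "\<forall>i<m. mv A n b i = 0" for b
  proof -
    have "0 = nsq m (mv A n b)" unfolding nsq_def using Ab by simp
    also have "\<dots> = (\<Sum>k<n. lam k * (coef u n b k)^2)" by (rule g_nsqA)
    finally have z: "(\<Sum>k<n. lam k * (coef u n b k)^2) = 0" by simp
    have "\<forall>k\<in>{..<n}. lam k * (coef u n b k)^2 = 0"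
      using z by (subst sum_nonneg_eq_0_iff[symmetric]) (auto intro: mult_nonneg_nonneg g_lam_nonneg)
    hence ck: "c k * coef u n b k = 0" if "k < n" for k using that unfolding c_def by force
    show ?thesis
    proof (intro allI impI)
      fix i assume i: "i < m"
      have "mv W n b i = (\<Sum>k<n. c k * coef u n b k * mv A n (u k) i)" using Wx[OF i] .
      also have "\<dots> = 0" using ck by (intro sum.neutral) auto
      finally show "mv W n b i = 0" .
    qed
  qed
  show ?thesis using Wc contrW pW nullW by blast
qed

end



lemma sum_split: fixes f :: "nat \<Rightarrow> 'a::comm_monoid_add" and q :: nat
  shows "(\<Sum>c<p+q. f c) = (\<Sum>l<p. f l) + (\<Sum>j<q. f (p+j))"
  by (induction q) (auto simp: add.commute add.left_commute)

lemma diag_idx: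
  assumes "A \<in> carrier_mat a b" "z \<in> carrier_vec b" "i < a" "c < b"
  shows "(A * Diag z) $$ (i,c) = A $$ (i,c) * z $ c"
proof -
  have D: "Diag z \<in> carrier_mat b b" using assms unfolding Diag_def by auto
  have "(A * Diag z) $$ (i,c) = (\<Sum>k<b. A $$ (i,k) * Diag z $$ (k,c))"
    using assms D by (intro mat_mult_idx) auto
  also have "\<dots> = (\<Sum>k<b. if k = c then A $$ (i,c) * z $ c else 0)"
    using assms by (intro sum.cong refl) (auto simp: Diag_def)
  finally show ?thesis using assms by simp
qed

lemma hcat_carrier: "A \<in> carrier_mat a b1 \<Longrightarrow> B \<in> carrier_mat a b2 \<Longrightarrow> hcat A B \<in> carrier_mat a (b1 + b2)"
  unfolding hcat_def by auto

lemma hcat_idx: "A \<in> carrier_mat a b1 \<Longrightarrow> B \<in> carrier_mat a b2 \<Longrightarrow> i < a \<Longrightarrow> c < b1 + b2 \<Longrightarrow>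
   hcat A B $$ (i,c) = (if c < b1 then A $$ (i,c) else B $$ (i, c - b1))"
  unfolding hcat_def by auto

lemma vnorm_nsq: "vnorm v = sqrt (nsq (dim_vec v) (\<lambda>i. v $ i))"
  unfolding vnorm_def nsq_def ..

lemma nsq_nonneg: "nsq n x \<ge> 0" unfolding nsq_def by (simp add: sum_nonneg)

lemma vnorm_sq: "(vnorm v)^2 = nsq (dim_vec v) (\<lambda>i. v $ i)"
  unfolding vnorm_nsq using nsq_nonneg by simp

lemma w_ub: "A \<in> carrier_mat m n \<Longrightarrow> contr W m n \<Longrightarrow> pairm W A m n \<le> nuc_norm A"
  using gdec_exists g_ub by blast

lemma w_key: "A \<in> carrier_mat m n \<Longrightarrow> contr W m n \<Longrightarrow> \<forall>i<m. mv W n b i = 0 \<Longrightarrow> nsq n b = 1 \<Longrightarrow>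
   spec_norm A > 0 \<Longrightarrow> pairm W A m n \<le> nuc_norm A - nsq m (mv A n b) / (2 * spec_norm A)"
  using gdec_exists g_key by blast

lemma w_specv: "A \<in> carrier_mat m n \<Longrightarrow> nsq m (mv A n x) \<le> (spec_norm A)^2 * nsq n x"
  using gdec_exists g_specv by blast

lemma w_spec_nonneg: "A \<in> carrier_mat m n \<Longrightarrow> spec_norm A \<ge> 0"
  using gdec_exists g_spec_nonneg by blast

lemma w_att: "A \<in> carrier_mat m n \<Longrightarrow> \<exists>W \<in> carrier_mat m n. contr W m n \<and> pairm W A m n = nuc_norm A \<and>
     (\<forall>b. (\<forall>i<m. mv A n b i = 0) \<longrightarrow> (\<forall>i<m. mv W n b i = 0))"
  using gdec_exists g_att by blast

lemma contr_col: assumes "contr W m n" "c < n" shows "(\<Sum>i<m. (W $$ (i,c))^2) \<le> 1"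
proof -
  define e where "e = (\<lambda>l. if l = c then (1::real) else 0)"
  have mvWe: "mv W n e i = W $$ (i,c)" for i
  proof -
    have "mv W n e i = (\<Sum>l<n. if l = c then W $$ (i,c) else 0)"
      unfolding mv_def e_def by (intro sum.cong) auto
    thus ?thesis using assms(2) by simp
  qed
  moreover have "nsq n e = 1"
  proof -
    have "nsq n e = (\<Sum>l<n. if l = c then 1 else 0)" unfolding nsq_def e_def by (intro sum.cong) auto
    thus ?thesis using assms(2) by simp
  qed
  moreover have "nsq m (mv W n e) \<le> nsq n e" using assms(1) unfolding contr_def by blast
  moreover have "nsq m (mv W n e) = (\<Sum>i<m. (W $$ (i,c))^2)" unfolding nsq_def mvWe ..
  ultimately show ?thesis by linarith
qed

lemma contr_sub:
  assumes W: "contr W d (p+q)" and s: "s^2 \<le> (1::real)"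
  shows "contr (mat d q (\<lambda>(i,j). s * W $$ (i, p+j))) d q"
  unfolding contr_def
proof
  fix x :: "nat \<Rightarrow> real"
  define y where "y = (\<lambda>c. if c < p then 0 else x (c - p))"
  have mvy: "mv (mat d q (\<lambda>(i,j). s * W $$ (i, p+j))) q x i = s * mv W (p+q) y i" if i: "i < d" for i
    unfolding mv_def sum_split y_def using i by (simp add: sum_distrib_left mult.assoc)
  have "nsq d (mv (mat d q (\<lambda>(i,j). s * W $$ (i, p+j))) q x) = s^2 * nsq d (mv W (p+q) y)"
    unfolding nsq_def by (simp add: mvy sum_distrib_left power_mult_distrib)
  also have "\<dots> \<le> 1 * nsq d (mv W (p+q) y)" using s nsq_nonneg by (intro mult_right_mono) auto
  also have "\<dots> \<le> nsq (p+q) y" using W unfolding contr_def by simp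
  also have "\<dots> = nsq q x" unfolding nsq_def sum_split y_def by simp
  finally show "nsq d (mv (mat d q (\<lambda>(i,j). s * W $$ (i, p+j))) q x) \<le> nsq q x" .
qed

lemma cs_abs:
  fixes f g :: "nat \<Rightarrow> real"
  assumes "finite I"
  shows "\<bar>\<Sum>i\<in>I. f i * g i\<bar> \<le> sqrt (\<Sum>i\<in>I. (f i)^2) * sqrt (\<Sum>i\<in>I. (g i)^2)"
proof -
  have "(\<Sum>i\<in>I. f i * g i) \<le> sqrt (\<Sum>i\<in>I. (f i)^2) * sqrt (\<Sum>i\<in>I. (g i)^2)" by (rule cs[OF assms])
  moreover have "(\<Sum>i\<in>I. (- f i) * g i) \<le> sqrt (\<Sum>i\<in>I. (- f i)^2) * sqrt (\<Sum>i\<in>I. (g i)^2)" by (rule cs[OF assms])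
  ultimately show ?thesis by (simp add: sum_negf)
qed

lemma final_arith:
  fixes a1 a2 sig N0 gam S Dl D :: real
  assumes "a1 > 0" "sig > 0" "N0 > 0" "gam \<ge> 0" "S \<le> 0" "a2 \<ge> 0" "Dl \<ge> 0"
    and "Dl > sqrt ((2 * gam - a2 * S) * sig / (a1 * N0))"
    and "D \<ge> a1 * Dl^2 * N0 / (2 * sig) - gam + a2 * S / 2"
  shows "D > 0"
proof -
  have "a2 * S \<le> 0" using assms by (simp add: mult_nonneg_nonpos)
  define R where "R = (2 * gam - a2 * S) * sig / (a1 * N0)"
  have R0: "R \<ge> 0" unfolding R_def using assms \<open>a2 * S \<le> 0\<close> by (intro divide_nonneg_pos mult_nonneg_nonneg) auto
  have "sqrt R < Dl" using assms(8) unfolding R_def .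
  hence "(sqrt R)^2 < Dl^2" using R0 by (intro power_strict_mono) auto
  hence "R < Dl^2" using R0 by simp
  hence "R * (a1 * N0) < Dl^2 * (a1 * N0)" using assms by (intro mult_strict_right_mono) auto
  hence "(2 * gam - a2 * S) * sig < Dl^2 * (a1 * N0)" unfolding R_def using assms by simp
  hence "(2 * gam - a2 * S) / 2 < a1 * Dl^2 * N0 / (2 * sig)" using assms by (simp add: field_simps)
  moreover have "(2 * gam - a2 * S) / 2 = gam - a2 * S / 2" by simp
  ultimately show ?thesis using assms(9) by linarith
qed



lemma pair_split:
  assumes "\<And>i l. i < d \<Longrightarrow> l < p \<Longrightarrow> A $$ (i,l) = B $$ (i,l)"
    and "\<And>i j. i < d \<Longrightarrow> j < q \<Longrightarrow> A $$ (i,p+j) = B $$ (i,p+j) + R i j"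
  shows "pairm W A d (p+q) = pairm W B d (p+q) + (\<Sum>i<d. \<Sum>j<q. W $$ (i,p+j) * R i j)"
proof -
  have "pairm W A d (p+q) = (\<Sum>i<d. (\<Sum>l<p. W $$ (i,l) * B $$ (i,l)) + (\<Sum>j<q. W $$ (i,p+j) * B $$ (i,p+j) + W $$ (i,p+j) * R i j))"
    unfolding pairm_def sum_split using assms by (intro sum.cong refl) (simp add: algebra_simps)
  also have "\<dots> = pairm W B d (p+q) + (\<Sum>i<d. \<Sum>j<q. W $$ (i,p+j) * R i j)"
    unfolding pairm_def sum_split by (simp add: sum.distrib)
  finally show ?thesis .
qed

lemma vn_diff: "a \<in> carrier_vec n \<Longrightarrow> b \<in> carrier_vec n \<Longrightarrow> (vnorm (a - b))^2 = (\<Sum>j<n. (a $ j - b $ j)^2)"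
  unfolding vnorm_sq nsq_def by simp

lemma mat_vec_idx: "A \<in> carrier_mat a b \<Longrightarrow> z \<in> carrier_vec b \<Longrightarrow> i < a \<Longrightarrow> (A *\<^sub>v z) $ i = (\<Sum>c<b. A $$ (i,c) * z $ c)"
  by (auto simp: scalar_prod_def lessThan_atLeast0 intro!: sum.cong)

theorem theorem1:
  fixes d p q :: nat
    and x :: "real vec" and Xh Xt :: "real mat"
    and wh wt zh zt ystar :: "real vec"
    and \<alpha>1 \<alpha>2 \<epsilon> :: real
  assumes x_dim: "x \<in> carrier_vec d"
    and Xh_dim: "Xh \<in> carrier_mat d p" and Xt_dim: "Xt \<in> carrier_mat d q"
    and wh_dim: "wh \<in> carrier_vec p" and wt_dim: "wt \<in> carrier_vec q"
    and zh_dim: "zh \<in> carrier_vec p" and zt_dim: "zt \<in> carrier_vec q"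
    and q_pos: "q \<ge> 1"
    and a1: "\<alpha>1 > 0" and a2: "\<alpha>2 \<ge> 0"
    and eps_nonneg: "\<epsilon> \<ge> 0"
    and eps_nuc: "nuc_norm (Xt - outer ((1 / real q) \<cdot>\<^sub>v (Xt *\<^sub>v ones q)) (ones q)) \<le> \<epsilon>"
    and eps_frob: "frob_norm (Xt - outer ((1 / real q) \<cdot>\<^sub>v (Xt *\<^sub>v ones q)) (ones q)) \<le> \<epsilon>"
    and eps_spec: "spec_norm (Xt - outer ((1 / real q) \<cdot>\<^sub>v (Xt *\<^sub>v ones q)) (ones q)) \<le> \<epsilon>"
    and eps_w: "vnorm (wt - ((ones q \<bullet> wt) / real q) \<cdot>\<^sub>v ones q) \<le> \<epsilon>"
    and ystar_dim: "ystar \<in> carrier_vec q"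
    and ystar_feas: "ystar \<bullet> ones q = real q * ((ones q \<bullet> zt) / real q)"
    and ystar_opt: "\<And>y. y \<in> carrier_vec q \<Longrightarrow> y \<bullet> ones q = real q * ((ones q \<bullet> zt) / real q)
                      \<Longrightarrow> (vnorm (ystar - wt))^2 \<le> (vnorm (y - wt))^2"
    and x0_nz: "(1 / real q) \<cdot>\<^sub>v (Xt *\<^sub>v ones q) \<noteq> 0\<^sub>v d"
    and M_nz: "hcat (Xh * Diag zh) (outer ((1 / real q) \<cdot>\<^sub>v (Xt *\<^sub>v ones q)) zt) \<noteq> 0\<^sub>m d (p + q)"
  shows
    "let X = hcat Xh Xt; w = wh @\<^sub>v wt;
         x0 = (1 / real q) \<cdot>\<^sub>v (Xt *\<^sub>v ones q);
         zbar = (ones q \<bullet> zt) / real q;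
         M = hcat (Xh * Diag zh) (outer x0 zt);
         \<gamma> = ((\<alpha>1 + vnorm (x - Xh *\<^sub>v zh - Xt *\<^sub>v (zbar \<cdot>\<^sub>v ones q))) * vnorm zt
                + \<alpha>1 * \<bar>zbar\<bar>) * \<epsilon>;
         \<delta> = sqrt ((2 * \<gamma> - \<alpha>2 * (\<Sum>j<q. (ystar $ j - zbar) * (ystar $ j + zbar - 2 * wt $ j)))
                   * spec_norm M / (\<alpha>1 * (vnorm x0)^2))
     in vnorm (zt - zbar \<cdot>\<^sub>v ones q) > \<delta> \<longrightarrow>
        obj x X \<alpha>1 \<alpha>2 w (zh @\<^sub>v zt) > obj x X \<alpha>1 \<alpha>2 w (zh @\<^sub>v (zbar \<cdot>\<^sub>v ones q))"
proof -
  define X where "X = hcat Xh Xt"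
  define w where "w = wh @\<^sub>v wt"
  define x0 where "x0 = (1 / real q) \<cdot>\<^sub>v (Xt *\<^sub>v ones q)"
  define zb where "zb = (ones q \<bullet> zt) / real q"
  define M where "M = hcat (Xh * Diag zh) (outer x0 zt)"
  define r where "r = x - Xh *\<^sub>v zh - Xt *\<^sub>v (zb \<cdot>\<^sub>v ones q)"
  define gam where "gam = ((\<alpha>1 + vnorm r) * vnorm zt + \<alpha>1 * \<bar>zb\<bar>) * \<epsilon>"
  define S where "S = (\<Sum>j<q. (ystar $ j - zb) * (ystar $ j + zb - 2 * wt $ j))"
  define Dl where "Dl = vnorm (zt - zb \<cdot>\<^sub>v ones q)"
  define del where "del = sqrt ((2 * gam - \<alpha>2 * S) * spec_norm M / (\<alpha>1 * (vnorm x0)^2))"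
  define E where "E = Xt - outer x0 (ones q)"
  define z1 where "z1 = zh @\<^sub>v zt"
  define z2 where "z2 = zh @\<^sub>v (zb \<cdot>\<^sub>v ones q)"
  have main: "Dl > del \<longrightarrow> obj x X \<alpha>1 \<alpha>2 w z1 > obj x X \<alpha>1 \<alpha>2 w z2"
  proof
    assume Dd: "Dl > del"
    have q0: "real q > 0" using q_pos by simp
    have Xc: "X \<in> carrier_mat d (p+q)" unfolding X_def using Xh_dim Xt_dim by (rule hcat_carrier)
    have z1c: "z1 \<in> carrier_vec (p+q)" unfolding z1_def using zh_dim zt_dim by simp
    have z2c: "z2 \<in> carrier_vec (p+q)" unfolding z2_def using zh_dim by (simp add: ones_def)
    have onesc: "ones q \<in> carrier_vec q" unfolding ones_def by simp
    have ones_i: "ones q $ j = 1" if "j < q" for j using that unfolding ones_def by simp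
    have x0c: "x0 \<in> carrier_vec d" unfolding x0_def using Xt_dim onesc by simp
    have Oc: "outer x0 (ones q) \<in> carrier_mat d q" unfolding outer_def using x0c onesc by auto
    have Ec: "E \<in> carrier_mat d q" unfolding E_def using Xt_dim Oc by auto
    have E_idx: "E $$ (i,j) = Xt $$ (i,j) - x0 $ i" if "i < d" "j < q" for i j
      unfolding E_def outer_def using that Xt_dim x0c onesc ones_i by auto
    have Mc: "M \<in> carrier_mat d (p+q)" unfolding M_def
      by (rule hcat_carrier) (use Xh_dim zh_dim x0c zt_dim in \<open>auto simp: Diag_def outer_def\<close>)
    have zb_sum: "zb = (\<Sum>j<q. zt $ j) / real q"
      unfolding zb_def scalar_prod_def using onesc zt_dim ones_i by (simp add: lessThan_atLeast0)
    define v where "v = (\<lambda>j. zt $ j - zb)"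
    have sumv: "(\<Sum>j<q. v j) = 0" unfolding v_def zb_sum using q0 by (simp add: sum_subtractf)
    have Dl2: "Dl^2 = (\<Sum>j<q. (v j)^2)"
      unfolding Dl_def vnorm_sq nsq_def v_def using zt_dim onesc ones_i by simp
    have Dl0: "Dl \<ge> 0" unfolding Dl_def vnorm_def by (simp add: sum_nonneg)
    have ztv: "(\<Sum>j<q. zt $ j * v j) = Dl^2"
    proof -
      have "(\<Sum>j<q. zt $ j * v j) = (\<Sum>j<q. (v j)^2 + zb * v j)"
        unfolding v_def by (intro sum.cong refl) (simp add: power2_eq_square algebra_simps)
      also have "\<dots> = Dl^2" using sumv Dl2 by (simp add: sum.distrib sum_distrib_left[symmetric])
      finally show ?thesis .
    qed
    have ztn: "vnorm zt = sqrt (\<Sum>j<q. (zt $ j)^2)" unfolding vnorm_def using zt_dim by simp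
    have Dl_le: "Dl \<le> vnorm zt"
    proof -
      have "Dl^2 \<le> sqrt (\<Sum>j<q. (zt $ j)^2) * sqrt (\<Sum>j<q. (v j)^2)"
        unfolding ztv[symmetric] by (rule cs) simp
      also have "sqrt (\<Sum>j<q. (v j)^2) = Dl" using Dl0 unfolding Dl2[symmetric] by simp
      also have "sqrt (\<Sum>j<q. (zt $ j)^2) = vnorm zt" using ztn by simp
      finally have DD: "Dl * Dl \<le> vnorm zt * Dl" by (simp add: power2_eq_square)
      have vz0: "vnorm zt \<ge> 0" unfolding vnorm_def by (simp add: sum_nonneg)
      show ?thesis
      proof (cases "Dl > 0")
        case True then show ?thesis using DD by (simp add: mult_le_cancel_right)
      next
        case False then show ?thesis using Dl0 vz0 by simp
      qed
    qed
    have wc: "w \<in> carrier_vec (p+q)" unfolding w_def using wh_dim wt_dim by simp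
    have zbc: "zb \<cdot>\<^sub>v ones q \<in> carrier_vec q" using onesc by simp
    have zw1: "(vnorm (z1 - w))^2 = (\<Sum>l<p. (zh$l - wh$l)^2) + (\<Sum>j<q. (zt$j - wt$j)^2)"
    proof -
      have "(vnorm (z1 - w))^2 = (\<Sum>c<p+q. (z1$c - w$c)^2)" by (rule vn_diff[OF z1c wc])
      also have "\<dots> = (\<Sum>l<p. (zh$l - wh$l)^2) + (\<Sum>j<q. (zt$j - wt$j)^2)"
        unfolding sum_split z1_def w_def using zh_dim zt_dim wh_dim wt_dim by simp
      finally show ?thesis .
    qed
    have zw2: "(vnorm (z2 - w))^2 = (\<Sum>l<p. (zh$l - wh$l)^2) + (\<Sum>j<q. (zb - wt$j)^2)"
    proof -
      have "(vnorm (z2 - w))^2 = (\<Sum>c<p+q. (z2$c - w$c)^2)" by (rule vn_diff[OF z2c wc])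
      also have "\<dots> = (\<Sum>l<p. (zh$l - wh$l)^2) + (\<Sum>j<q. (zb - wt$j)^2)"
        unfolding sum_split z2_def w_def using zh_dim zbc wh_dim wt_dim ones_i onesc by simp
      finally show ?thesis .
    qed
    have feas1: "zt \<bullet> ones q = real q * ((ones q \<bullet> zt) / real q)"
      using comm_scalar_prod[OF zt_dim onesc] q0 by simp
    have oo: "ones q \<bullet> ones q = real q" unfolding scalar_prod_def using ones_i onesc by (simp add: lessThan_atLeast0[symmetric])
    have feas2: "(zb \<cdot>\<^sub>v ones q) \<bullet> ones q = real q * ((ones q \<bullet> zt) / real q)"
      using oo onesc unfolding zb_def by (simp add: smult_scalar_prod_distrib)
    have y1: "(\<Sum>j<q. (ystar$j - wt$j)^2) \<le> (\<Sum>j<q. (zt$j - wt$j)^2)"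
      using ystar_opt[OF zt_dim feas1] vn_diff[OF ystar_dim wt_dim] vn_diff[OF zt_dim wt_dim] by simp
    have zbs: "(\<Sum>j<q. ((zb \<cdot>\<^sub>v ones q)$j - wt$j)^2) = (\<Sum>j<q. (zb - wt$j)^2)"
      using onesc ones_i by (intro sum.cong refl) auto
    have y2: "(\<Sum>j<q. (ystar$j - wt$j)^2) \<le> (\<Sum>j<q. (zb - wt$j)^2)"
      using ystar_opt[OF zbc feas2] vn_diff[OF ystar_dim wt_dim] vn_diff[OF zbc wt_dim] zbs by simp
    have S_eq: "S = (\<Sum>j<q. (ystar$j - wt$j)^2) - (\<Sum>j<q. (zb - wt$j)^2)"
      unfolding S_def sum_subtractf[symmetric] by (intro sum.cong refl) (simp add: power2_eq_square algebra_simps)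
    have S0: "S \<le> 0" using S_eq y2 by simp
    have zwS: "(vnorm (z1 - w))^2 - (vnorm (z2 - w))^2 \<ge> S" using zw1 zw2 S_eq y1 by simp
    have X_idx: "X $$ (i,c) = (if c < p then Xh $$ (i,c) else Xt $$ (i, c - p))" if "i < d" "c < p+q" for i c
      unfolding X_def using hcat_idx[OF Xh_dim Xt_dim that] .
    have Xz1: "(X *\<^sub>v z1) $ i = (\<Sum>l<p. Xh $$ (i,l) * zh $ l) + (\<Sum>j<q. Xt $$ (i,j) * zt $ j)" if i: "i < d" for i
      unfolding mat_vec_idx[OF Xc z1c i] sum_split using i X_idx zh_dim zt_dim by (simp add: z1_def)
    have Xz2: "(X *\<^sub>v z2) $ i = (\<Sum>l<p. Xh $$ (i,l) * zh $ l) + (\<Sum>j<q. Xt $$ (i,j) * zb)" if i: "i < d" for i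
      unfolding mat_vec_idx[OF Xc z2c i] sum_split using i X_idx zh_dim onesc ones_i by (simp add: z2_def)
    have rc: "r \<in> carrier_vec d" unfolding r_def using x_dim Xh_dim Xt_dim zh_dim onesc by simp
    have r_idx: "r $ i = x $ i - (\<Sum>l<p. Xh $$ (i,l) * zh $ l) - (\<Sum>j<q. Xt $$ (i,j) * zb)" if i: "i < d" for i
    proof -
      have "(Xh *\<^sub>v zh) $ i = (\<Sum>l<p. Xh $$ (i,l) * zh $ l)" by (rule mat_vec_idx[OF Xh_dim zh_dim i])
      moreover have "(Xt *\<^sub>v (zb \<cdot>\<^sub>v ones q)) $ i = (\<Sum>j<q. Xt $$ (i,j) * (zb \<cdot>\<^sub>v ones q) $ j)"
        by (rule mat_vec_idx[OF Xt_dim zbc i])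
      moreover have "(\<Sum>j<q. Xt $$ (i,j) * (zb \<cdot>\<^sub>v ones q) $ j) = (\<Sum>j<q. Xt $$ (i,j) * zb)"
        using onesc ones_i by (intro sum.cong refl) auto
      ultimately show ?thesis unfolding r_def using i x_dim Xh_dim Xt_dim zh_dim onesc by simp
    qed
    have rvn: "vnorm (x - X *\<^sub>v z2) = vnorm r"
    proof -
      have "(x - X *\<^sub>v z2) = r"
        by (rule eq_vecI) (use x_dim Xc rc Xz2 r_idx in auto)
      thus ?thesis by simp
    qed
    have Ev_idx: "mv E q v i = (\<Sum>j<q. Xt $$ (i,j) * zt $ j) - (\<Sum>j<q. Xt $$ (i,j) * zb)" if i: "i < d" for i
    proof -
      have "mv E q v i = (\<Sum>j<q. Xt $$ (i,j) * zt $ j - Xt $$ (i,j) * zb - x0 $ i * v j)"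
        unfolding mv_def by (intro sum.cong refl) (auto simp: E_idx[OF i] v_def algebra_simps)
      also have "\<dots> = (\<Sum>j<q. Xt $$ (i,j) * zt $ j) - (\<Sum>j<q. Xt $$ (i,j) * zb) - x0 $ i * (\<Sum>j<q. v j)"
        by (simp add: sum_subtractf sum_distrib_left)
      finally show ?thesis using sumv by simp
    qed
    have xz1: "(x - X *\<^sub>v z1) $ i = r $ i - mv E q v i" if i: "i < d" for i
      using i x_dim Xc z1c Xz1 r_idx Ev_idx by simp
    have "X *\<^sub>v z1 \<in> carrier_vec d" using Xc z1c by (simp add: mult_mat_vec_carrier)
    hence xz1c: "x - X *\<^sub>v z1 \<in> carrier_vec d" using x_dim by simp
    have vr: "vnorm r = sqrt (nsq d (\<lambda>i. r $ i))" unfolding vnorm_nsq using rc by simp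
    have specE: "spec_norm E \<le> \<epsilon>" using eps_spec unfolding E_def x0_def .
    have specE0: "spec_norm E \<ge> 0" by (rule w_spec_nonneg[OF Ec])
    have Ev: "sqrt (nsq d (mv E q v)) \<le> \<epsilon> * vnorm zt"
    proof -
      have "sqrt (nsq d (mv E q v)) \<le> sqrt ((spec_norm E)^2 * nsq q v)"
        using w_specv[OF Ec] by (rule real_sqrt_le_mono)
      also have "\<dots> = spec_norm E * Dl"
      proof -
        have "sqrt (nsq q v) = Dl" unfolding nsq_def Dl2[symmetric] using Dl0 by simp
        thus ?thesis using specE0 by (simp add: real_sqrt_mult)
      qed
      also have "\<dots> \<le> \<epsilon> * vnorm zt" using specE specE0 Dl_le Dl0 by (intro mult_mono) auto
      finally show ?thesis .
    qed
    have quad: "(vnorm (x - X *\<^sub>v z1))^2 \<ge> (vnorm r)^2 - 2 * vnorm r * (\<epsilon> * vnorm zt)"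
    proof -
      have eq1: "(vnorm (x - X *\<^sub>v z1))^2 = (\<Sum>i<d. (r $ i - mv E q v i)^2)"
      proof -
        have "dim_vec (x - X *\<^sub>v z1) = d" using xz1c by (simp only: carrier_vecD)
        hence "(vnorm (x - X *\<^sub>v z1))^2 = (\<Sum>i<d. ((x - X *\<^sub>v z1) $ i)^2)" unfolding vnorm_sq nsq_def by simp
        also have "\<dots> = (\<Sum>i<d. (r $ i - mv E q v i)^2)" by (intro sum.cong refl) (simp add: xz1)
        finally show ?thesis .
      qed
      have eq2: "(\<Sum>i<d. (r $ i - mv E q v i)^2) = nsq d (\<lambda>i. r $ i) - 2 * (\<Sum>i<d. r $ i * mv E q v i) + nsq d (mv E q v)"
        unfolding nsq_def by (simp add: power2_diff sum.distrib sum_subtractf sum_distrib_left mult.assoc)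
      have csb: "(\<Sum>i<d. r $ i * mv E q v i) \<le> sqrt (nsq d (\<lambda>i. r $ i)) * sqrt (nsq d (mv E q v))"
        unfolding nsq_def by (rule cs) simp
      have "(vnorm (x - X *\<^sub>v z1))^2 \<ge> nsq d (\<lambda>i. r $ i) - 2 * (sqrt (nsq d (\<lambda>i. r $ i)) * sqrt (nsq d (mv E q v)))"
        using eq1 eq2 csb nsq_nonneg[of d "mv E q v"] by linarith
      moreover have "sqrt (nsq d (\<lambda>i. r $ i)) * sqrt (nsq d (mv E q v)) \<le> vnorm r * (\<epsilon> * vnorm zt)"
        unfolding vr[symmetric] using Ev by (intro mult_left_mono) (auto simp: vnorm_def sum_nonneg)
      moreover have "nsq d (\<lambda>i. r $ i) = (vnorm r)^2" unfolding vr using nsq_nonneg by simp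
      ultimately show ?thesis by linarith
    qed
    have vz0: "vnorm zt \<ge> 0" unfolding vnorm_def by (simp add: sum_nonneg)
    define B1 where "B1 = X * Diag z1"
    define B2 where "B2 = X * Diag z2"
    define M' where "M' = mat d (p+q) (\<lambda>(i,c). if c < p then Xh $$ (i,c) * zh $ c else x0 $ i * zb)"
    have Dz1: "Diag z1 \<in> carrier_mat (p+q) (p+q)" using z1c unfolding Diag_def by auto
    have Dz2: "Diag z2 \<in> carrier_mat (p+q) (p+q)" using z2c unfolding Diag_def by auto
    have B1c: "B1 \<in> carrier_mat d (p+q)" unfolding B1_def using Xc Dz1 by simp
    have B2c: "B2 \<in> carrier_mat d (p+q)" unfolding B2_def using Xc Dz2 by simp
    have M'c: "M' \<in> carrier_mat d (p+q)" unfolding M'_def by simp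
    have B1l: "B1 $$ (i,l) = Xh $$ (i,l) * zh $ l" if "i < d" "l < p" for i l
      unfolding B1_def using that diag_idx[OF Xc z1c, of i l] X_idx zh_dim zt_dim by (simp add: z1_def)
    have B1r: "B1 $$ (i,p+j) = Xt $$ (i,j) * zt $ j" if "i < d" "j < q" for i j
      unfolding B1_def using that diag_idx[OF Xc z1c, of i "p+j"] X_idx zh_dim zt_dim by (simp add: z1_def)
    have B2l: "B2 $$ (i,l) = Xh $$ (i,l) * zh $ l" if "i < d" "l < p" for i l
      unfolding B2_def using that diag_idx[OF Xc z2c, of i l] X_idx zh_dim by (simp add: z2_def)
    have B2r: "B2 $$ (i,p+j) = Xt $$ (i,j) * zb" if "i < d" "j < q" for i j
      unfolding B2_def using that diag_idx[OF Xc z2c, of i "p+j"] X_idx zh_dim onesc ones_i by (simp add: z2_def)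
    have XDc: "Xh * Diag zh \<in> carrier_mat d p" using Xh_dim zh_dim unfolding Diag_def by auto
    have Oz: "outer x0 zt \<in> carrier_mat d q" using x0c zt_dim unfolding outer_def by auto
    have Ml: "M $$ (i,l) = Xh $$ (i,l) * zh $ l" if "i < d" "l < p" for i l
      unfolding M_def using that hcat_idx[OF XDc Oz, of i l] diag_idx[OF Xh_dim zh_dim, of i l] by simp
    have Mr: "M $$ (i,p+j) = x0 $ i * zt $ j" if "i < d" "j < q" for i j
      unfolding M_def using that hcat_idx[OF XDc Oz, of i "p+j"] x0c zt_dim by (simp add: outer_def)
    have M'l: "M' $$ (i,l) = Xh $$ (i,l) * zh $ l" if "i < d" "l < p" for i l
      unfolding M'_def using that by simp
    have M'r: "M' $$ (i,p+j) = x0 $ i * zb" if "i < d" "j < q" for i j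
      unfolding M'_def using that by simp
    have stepA: "nuc_norm B1 \<ge> nuc_norm M - vnorm zt * \<epsilon>"
    proof -
      obtain W where Wc: "W \<in> carrier_mat d (p+q)" and cW: "contr W d (p+q)" and pW: "pairm W M d (p+q) = nuc_norm M"
        using w_att[OF Mc] by blast
      define T where "T = (\<Sum>i<d. \<Sum>j<q. W $$ (i,p+j) * (E $$ (i,j) * zt $ j))"
      have h1: "B1 $$ (i,l) = M $$ (i,l)" if il: "i < d" "l < p" for i l
        unfolding B1l[OF il] Ml[OF il] by (rule refl)
      have h2: "B1 $$ (i,p+j) = M $$ (i,p+j) + E $$ (i,j) * zt $ j" if ij: "i < d" "j < q" for i j
        unfolding B1r[OF ij] Mr[OF ij] E_idx[OF ij] by (simp add: algebra_simps)
      have "pairm W B1 d (p+q) = pairm W M d (p+q) + T"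
        unfolding T_def by (rule pair_split[where A=B1 and B=M and R="\<lambda>i j. E $$ (i,j) * zt $ j", OF h1 h2])
      hence pB1: "pairm W B1 d (p+q) = nuc_norm M + T" using pW by simp
      have ub: "pairm W B1 d (p+q) \<le> nuc_norm B1" by (rule w_ub[OF B1c cW])
      define cE where "cE = (\<lambda>j. sqrt (\<Sum>i<d. (E $$ (i,j))^2))"
      have col: "\<bar>\<Sum>i<d. W $$ (i,p+j) * E $$ (i,j)\<bar> \<le> cE j" if j: "j < q" for j
      proof -
        have "\<bar>\<Sum>i<d. W $$ (i,p+j) * E $$ (i,j)\<bar> \<le> sqrt (\<Sum>i<d. (W $$ (i,p+j))^2) * sqrt (\<Sum>i<d. (E $$ (i,j))^2)"
          by (rule cs_abs) simp
        also have "\<dots> \<le> 1 * cE j" unfolding cE_def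
          using contr_col[OF cW, of "p+j"] j by (intro mult_right_mono) (auto simp: sum_nonneg)
        finally show ?thesis by simp
      qed
      have T_eq: "T = (\<Sum>j<q. zt $ j * (\<Sum>i<d. W $$ (i,p+j) * E $$ (i,j)))"
      proof -
        have "T = (\<Sum>j<q. \<Sum>i<d. W $$ (i,p+j) * (E $$ (i,j) * zt $ j))" unfolding T_def by (rule sum.swap)
        thus ?thesis by (simp add: sum_distrib_left mult_ac)
      qed
      have "- T \<le> \<bar>T\<bar>" by simp
      also have "\<bar>T\<bar> \<le> (\<Sum>j<q. \<bar>zt $ j\<bar> * cE j)"
        unfolding T_eq
        by (rule order_trans[OF sum_abs], rule sum_mono) (auto simp: abs_mult intro: mult_left_mono col)
      also have "\<dots> \<le> sqrt (\<Sum>j<q. (\<bar>zt $ j\<bar>)^2) * sqrt (\<Sum>j<q. (cE j)^2)" by (rule cs) simp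
      also have "sqrt (\<Sum>j<q. (\<bar>zt $ j\<bar>)^2) = vnorm zt" using ztn by simp
      also have "(\<Sum>j<q. (cE j)^2) = (\<Sum>i<d. \<Sum>j<q. (E $$ (i,j))^2)"
        unfolding cE_def by (simp add: sum_nonneg) (rule sum.swap)
      also have "sqrt \<dots> = frob_norm E" unfolding frob_norm_def using Ec by simp
      also have "vnorm zt * frob_norm E \<le> vnorm zt * \<epsilon>"
        using eps_frob vz0 unfolding E_def x0_def by (intro mult_left_mono) auto
      finally have "- T \<le> vnorm zt * \<epsilon>" .
      thus ?thesis using pB1 ub by linarith
    qed
    have stepB: "nuc_norm B2 \<le> nuc_norm M' + \<bar>zb\<bar> * \<epsilon>"
    proof -
      obtain W where Wc: "W \<in> carrier_mat d (p+q)" and cW: "contr W d (p+q)" and pW: "pairm W B2 d (p+q) = nuc_norm B2"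
        using w_att[OF B2c] by blast
      define T where "T = (\<Sum>i<d. \<Sum>j<q. W $$ (i,p+j) * (zb * E $$ (i,j)))"
      have h1: "B2 $$ (i,l) = M' $$ (i,l)" if il: "i < d" "l < p" for i l
        unfolding B2l[OF il] M'l[OF il] by (rule refl)
      have h2: "B2 $$ (i,p+j) = M' $$ (i,p+j) + zb * E $$ (i,j)" if ij: "i < d" "j < q" for i j
        unfolding B2r[OF ij] M'r[OF ij] E_idx[OF ij] by (simp add: algebra_simps)
      have "pairm W B2 d (p+q) = pairm W M' d (p+q) + T"
        unfolding T_def by (rule pair_split[where A=B2 and B=M' and R="\<lambda>i j. zb * E $$ (i,j)", OF h1 h2])
      moreover have "pairm W M' d (p+q) \<le> nuc_norm M'" by (rule w_ub[OF M'c cW])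
      moreover have "T \<le> \<bar>zb\<bar> * \<epsilon>"
      proof -
        define W1 where "W1 = mat d q (\<lambda>(i,j). 1 * W $$ (i, p+j))"
        define W2 where "W2 = mat d q (\<lambda>(i,j). (-1) * W $$ (i, p+j))"
        have c1: "contr W1 d q" unfolding W1_def by (rule contr_sub[OF cW]) simp
        have c2: "contr W2 d q" unfolding W2_def by (rule contr_sub[OF cW]) simp
        define P where "P = (\<Sum>i<d. \<Sum>j<q. W $$ (i,p+j) * E $$ (i,j))"
        have P1: "pairm W1 E d q = P" unfolding pairm_def W1_def P_def by simp
        have P2: "pairm W2 E d q = - P" unfolding pairm_def W2_def P_def by (simp add: sum_negf)
        have nucE: "nuc_norm E \<le> \<epsilon>" using eps_nuc unfolding E_def x0_def .
        have "\<bar>P\<bar> \<le> nuc_norm E" using w_ub[OF Ec c1] w_ub[OF Ec c2] P1 P2 by linarith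
        hence aP: "\<bar>P\<bar> \<le> \<epsilon>" using nucE by linarith
        have "T = zb * P" unfolding T_def P_def by (simp add: sum_distrib_left mult_ac)
        also have "\<dots> \<le> \<bar>zb\<bar> * \<bar>P\<bar>" by (metis abs_ge_self abs_mult)
        also have "\<dots> \<le> \<bar>zb\<bar> * \<epsilon>" using aP by (intro mult_left_mono) auto
        finally show ?thesis .
      qed
      ultimately show ?thesis using pW by linarith
    qed
    have stepC: "nuc_norm M' \<le> nuc_norm M - Dl^2 * (vnorm x0)^2 / (2 * spec_norm M)"
      if DlP: "Dl > 0" and spP: "spec_norm M > 0"
    proof -
      obtain W where Wc: "W \<in> carrier_mat d (p+q)" and cW: "contr W d (p+q)" and pW: "pairm W M' d (p+q) = nuc_norm M'"
        and nullW: "\<forall>b. (\<forall>i<d. mv M' (p+q) b i = 0) \<longrightarrow> (\<forall>i<d. mv W (p+q) b i = 0)"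
        using w_att[OF M'c] by blast
      define b where "b = (\<lambda>c. if c < p then 0 else v (c - p) / Dl)"
      have mvb: "mv A (p+q) b i = (\<Sum>j<q. A $$ (i,p+j) * v j) / Dl" for A i
        unfolding mv_def sum_split b_def by (simp add: sum_divide_distrib)
      have nb: "nsq (p+q) b = 1"
      proof -
        have "nsq (p+q) b = (\<Sum>j<q. (v j)^2) / Dl^2"
          unfolding nsq_def sum_split b_def by (simp add: power_divide sum_divide_distrib)
        moreover have "Dl^2 > 0" using DlP by simp
        ultimately show ?thesis using Dl2 by simp
      qed
      have M'b: "\<forall>i<d. mv M' (p+q) b i = 0"
      proof (intro allI impI)
        fix i assume i: "i < d"
        have "mv M' (p+q) b i = (\<Sum>j<q. x0 $ i * zb * v j) / Dl" unfolding mvb using i M'r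
          by (simp add: mult.assoc)
        also have "\<dots> = x0 $ i * zb * (\<Sum>j<q. v j) / Dl" by (simp add: sum_distrib_left)
        finally show "mv M' (p+q) b i = 0" using sumv by simp
      qed
      have Wb: "\<forall>i<d. mv W (p+q) b i = 0" using nullW M'b by blast
      have h1: "M $$ (i,l) = M' $$ (i,l)" if il: "i < d" "l < p" for i l
        unfolding Ml[OF il] M'l[OF il] by (rule refl)
      have h2: "M $$ (i,p+j) = M' $$ (i,p+j) + x0 $ i * v j" if ij: "i < d" "j < q" for i j
        unfolding Mr[OF ij] M'r[OF ij] v_def by (simp add: algebra_simps)
      have "pairm W M d (p+q) = pairm W M' d (p+q) + (\<Sum>i<d. \<Sum>j<q. W $$ (i,p+j) * (x0 $ i * v j))"
        by (rule pair_split[where A=M and B=M' and R="\<lambda>i j. x0 $ i * v j", OF h1 h2])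
      also have "(\<Sum>i<d. \<Sum>j<q. W $$ (i,p+j) * (x0 $ i * v j)) = 0"
      proof -
        have "(\<Sum>j<q. W $$ (i,p+j) * (x0 $ i * v j)) = 0" if i: "i < d" for i
        proof -
          have e1: "x0 $ i * Dl * mv W (p+q) b i = x0 $ i * (\<Sum>j<q. W $$ (i,p+j) * v j)"
            unfolding mvb using DlP by simp
          have e2: "(\<Sum>j<q. W $$ (i,p+j) * (x0 $ i * v j)) = x0 $ i * (\<Sum>j<q. W $$ (i,p+j) * v j)"
            by (simp add: sum_distrib_left mult_ac)
          have "mv W (p+q) b i = 0" using Wb i by simp
          thus ?thesis using e1 e2 by simp
        qed
        thus ?thesis by (intro sum.neutral) auto
      qed
      finally have pWM: "pairm W M d (p+q) = nuc_norm M'" using pW by simp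
      have key: "pairm W M d (p+q) \<le> nuc_norm M - nsq d (mv M (p+q) b) / (2 * spec_norm M)"
        by (rule w_key[OF Mc cW Wb nb spP])
      have Mb: "mv M (p+q) b i = x0 $ i * Dl" if i: "i < d" for i
      proof -
        have "mv M (p+q) b i = (\<Sum>j<q. x0 $ i * (zt $ j * v j)) / Dl" unfolding mvb using i Mr
          by (simp add: mult.assoc)
        also have "\<dots> = x0 $ i * Dl^2 / Dl" using ztv by (simp add: sum_distrib_left[symmetric])
        also have "\<dots> = x0 $ i * Dl" using DlP by (simp add: power2_eq_square)
        finally show ?thesis .
      qed
      have "nsq d (mv M (p+q) b) = Dl^2 * (vnorm x0)^2"
      proof -
        have "nsq d (mv M (p+q) b) = (\<Sum>i<d. (x0 $ i)^2 * Dl^2)"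
          unfolding nsq_def by (intro sum.cong refl) (simp add: Mb power_mult_distrib)
        also have "\<dots> = Dl^2 * (\<Sum>i<d. (x0 $ i)^2)" by (simp add: sum_distrib_left mult.commute)
        also have "(\<Sum>i<d. (x0 $ i)^2) = (vnorm x0)^2" unfolding vnorm_sq nsq_def using x0c by simp
        finally show ?thesis .
      qed
      thus ?thesis using key pWM by simp
    qed
    have specM0: "spec_norm M \<ge> 0" by (rule w_spec_nonneg[OF Mc])
    have specM: "spec_norm M > 0"
    proof -
      have "M \<noteq> 0\<^sub>m d (p+q)" using M_nz unfolding M_def x0_def .
      then obtain i c where ic: "i < d" "c < p+q" "M $$ (i,c) \<noteq> 0"
        using Mc by (metis carrier_matD(1) carrier_matD(2) eq_matI index_zero_mat(1) index_zero_mat(2) index_zero_mat(3))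
      define e where "e = (\<lambda>l. if l = c then (1::real) else 0)"
      have mve: "mv M (p+q) e i' = M $$ (i',c)" for i'
      proof -
        have "mv M (p+q) e i' = (\<Sum>l<p+q. if l = c then M $$ (i',c) else 0)"
          unfolding mv_def e_def by (intro sum.cong) auto
        thus ?thesis using ic by simp
      qed
      have ne: "nsq (p+q) e = 1"
      proof -
        have "nsq (p+q) e = (\<Sum>l<p+q. if l = c then 1 else 0)" unfolding nsq_def e_def by (intro sum.cong) auto
        thus ?thesis using ic by simp
      qed
      have "(M $$ (i,c))^2 \<le> nsq d (mv M (p+q) e)"
        unfolding nsq_def mve using ic by (intro member_le_sum) auto
      also have "\<dots> \<le> (spec_norm M)^2 * nsq (p+q) e" by (rule w_specv[OF Mc])
      finally have le: "(M $$ (i,c))^2 \<le> (spec_norm M)^2" using ne by simp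
      have "(M $$ (i,c))^2 > 0" using ic by simp
      hence "(spec_norm M)^2 > 0" using le by linarith
      thus ?thesis using specM0 by (simp add: less_eq_real_def)
    qed
    have N0: "(vnorm x0)^2 > 0"
    proof -
      obtain i where i: "i < d" "x0 $ i \<noteq> 0" using x0_nz unfolding x0_def[symmetric]
        using x0c by (metis carrier_vecD eq_vecI index_zero_vec(1) index_zero_vec(2))
      have "(x0 $ i)^2 \<le> (\<Sum>j<d. (x0 $ j)^2)" using i by (intro member_le_sum) auto
      moreover have "(vnorm x0)^2 = (\<Sum>j<d. (x0 $ j)^2)" unfolding vnorm_sq nsq_def using x0c by simp
      moreover have "(x0 $ i)^2 > 0" using i by simp
      ultimately show ?thesis by linarith
    qed
    have vr0: "vnorm r \<ge> 0" unfolding vnorm_def by (simp add: sum_nonneg)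
    have gam0: "gam \<ge> 0" unfolding gam_def using a1 vr0 vz0 eps_nonneg by (intro mult_nonneg_nonneg add_nonneg_nonneg) auto
    have a2S: "\<alpha>2 * S \<le> 0" using a2 S0 by (simp add: mult_nonneg_nonpos)
    have del0: "del \<ge> 0" unfolding del_def using gam0 a2S specM0 N0 a1
      by (intro real_sqrt_ge_zero divide_nonneg_pos mult_nonneg_nonneg) auto
    have DlP: "Dl > 0" using Dd del0 by simp
    have C: "nuc_norm M' \<le> nuc_norm M - Dl^2 * (vnorm x0)^2 / (2 * spec_norm M)" using stepC DlP specM by blast
    have nucdiff: "nuc_norm B1 - nuc_norm B2 \<ge> Dl^2 * (vnorm x0)^2 / (2 * spec_norm M) - vnorm zt * \<epsilon> - \<bar>zb\<bar> * \<epsilon>"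
      using stepA stepB C by linarith
    have o1: "obj x X \<alpha>1 \<alpha>2 w z1 = (1/2) * (vnorm (x - X *\<^sub>v z1))^2 + \<alpha>1 * nuc_norm B1 + (\<alpha>2/2) * (vnorm (z1 - w))^2"
      unfolding obj_def B1_def ..
    have o2: "obj x X \<alpha>1 \<alpha>2 w z2 = (1/2) * (vnorm r)^2 + \<alpha>1 * nuc_norm B2 + (\<alpha>2/2) * (vnorm (z2 - w))^2"
      unfolding obj_def B2_def rvn ..
    have t1: "\<alpha>1 * (nuc_norm B1 - nuc_norm B2) \<ge> \<alpha>1 * (Dl^2 * (vnorm x0)^2 / (2 * spec_norm M) - vnorm zt * \<epsilon> - \<bar>zb\<bar> * \<epsilon>)"
      using nucdiff a1 by (intro mult_left_mono) auto
    have t2: "(\<alpha>2/2) * ((vnorm (z1 - w))^2 - (vnorm (z2 - w))^2) \<ge> (\<alpha>2/2) * S"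
      using zwS a2 by (intro mult_left_mono) auto
    have Dge: "obj x X \<alpha>1 \<alpha>2 w z1 - obj x X \<alpha>1 \<alpha>2 w z2 \<ge> \<alpha>1 * Dl^2 * (vnorm x0)^2 / (2 * spec_norm M) - gam + \<alpha>2 * S / 2"
    proof -
      have "obj x X \<alpha>1 \<alpha>2 w z1 - obj x X \<alpha>1 \<alpha>2 w z2 = (1/2) * ((vnorm (x - X *\<^sub>v z1))^2 - (vnorm r)^2)
         + \<alpha>1 * (nuc_norm B1 - nuc_norm B2) + (\<alpha>2/2) * ((vnorm (z1 - w))^2 - (vnorm (z2 - w))^2)"
        unfolding o1 o2 by (simp add: algebra_simps)
      moreover have "(1/2) * ((vnorm (x - X *\<^sub>v z1))^2 - (vnorm r)^2) \<ge> - (vnorm r * (\<epsilon> * vnorm zt))"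
        using quad by simp
      moreover have "\<alpha>1 * (Dl^2 * (vnorm x0)^2 / (2 * spec_norm M) - vnorm zt * \<epsilon> - \<bar>zb\<bar> * \<epsilon>)
          = \<alpha>1 * Dl^2 * (vnorm x0)^2 / (2 * spec_norm M) - \<alpha>1 * vnorm zt * \<epsilon> - \<alpha>1 * \<bar>zb\<bar> * \<epsilon>"
        by (simp add: algebra_simps)
      moreover have "gam = vnorm r * (\<epsilon> * vnorm zt) + \<alpha>1 * vnorm zt * \<epsilon> + \<alpha>1 * \<bar>zb\<bar> * \<epsilon>"
        unfolding gam_def by (simp add: algebra_simps)
      ultimately show ?thesis using t1 t2 by linarith
    qed
    show "obj x X \<alpha>1 \<alpha>2 w z1 > obj x X \<alpha>1 \<alpha>2 w z2"
    proof -
      have "obj x X \<alpha>1 \<alpha>2 w z1 - obj x X \<alpha>1 \<alpha>2 w z2 > 0"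
        by (rule final_arith[OF a1 specM N0 gam0 S0 a2 Dl0 _ Dge]) (use Dd in \<open>simp add: del_def\<close>)
      thus ?thesis by simp
    qed
  qed
  show ?thesis using main unfolding Let_def X_def w_def x0_def zb_def M_def r_def gam_def S_def Dl_def del_def z1_def z2_def .
qed

end
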